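(* Let $\mathcal H=L^2(S^1,\mathbb C^{N+1})$ and let $\mathcal H_+\subset\mathcal H$ be the subspace of boundary values of holomorphic maps $\{|z|<1\}\to\mathbb C^{N+1}$. Let $\mathbb P\subset\mathcal H$ be a closed subspace such that $z^{-1}\mathbb P\subset\mathbb P$ and $\mathbb P\oplus\mathcal H_+=\mathcal H$ (direct sum, not necessarily orthogonal). Then $\bigcap_{n\ge0}z^{-n}\mathbb P=\{0\}$.
   Context: Here $z$ denotes the coordinate function on $S^1=\{|z|=1\}$, acting on $\mathcal H$ by multiplication. *)

theory Defs
  imports "HOL-Analysis.Analysis"
begin

text \<open>Arc-length measure on the unit circle S^1 (as a measure on complex numbers,
  concentrated on the circle).\<close>
definition circ :: "complex measure" where
  "circ = distr (restrict_space lborel {0..<2*pi}) borel (\<lambda>t. cis t)"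

text \<open>Representatives of elements of H = L^2(S^1, C^(N+1)); here C^(N+1) is complex^'n
  with 'n a finite index type of cardinality N+1. Elements of H are equivalence classes
  modulo equality circ-almost everywhere.\<close>
definition L2 :: "(complex \<Rightarrow> complex^'n::finite) set" where
  "L2 = {f. f \<in> borel_measurable circ \<and> integrable circ (\<lambda>z. (norm (f z))^2)}"

definition L2_norm :: "(complex \<Rightarrow> complex^'n::finite) \<Rightarrow> real" where
  "L2_norm f = sqrt (\<integral>z. (norm (f z))^2 \<partial>circ)"

text \<open>H_+ : the Hardy space, boundary values of holomorphic maps from the unit disc,
  i.e. the elements of H whose negative Fourier coefficients vanish:
  the integral of z^(-k) f(z), k<0, i.e. of z^m f(z), m \<ge> 1, is zero.\<close>
definition Hplus :: "(complex \<Rightarrow> complex^'n::finite) set" where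
  "Hplus = {f \<in> L2. \<forall>m::nat. m \<ge> 1 \<longrightarrow> (\<integral>z. (z^m) *s f z \<partial>circ) = 0}"

text \<open>A closed (complex-linear) subspace of H, given by a set of representatives.
  Closedness in the L^2 norm also makes the set saturated under a.e. equality.\<close>
definition closed_L2_subspace :: "(complex \<Rightarrow> complex^'n::finite) set \<Rightarrow> bool" where
  "closed_L2_subspace P \<longleftrightarrow>
     P \<subseteq> L2 \<and> (\<lambda>z. 0) \<in> P \<and>
     (\<forall>f\<in>P. \<forall>g\<in>P. (\<lambda>z. f z + g z) \<in> P) \<and>
     (\<forall>f\<in>P. \<forall>c::complex. (\<lambda>z. c *s f z) \<in> P) \<and>
     (\<forall>fs f. (\<forall>k. fs k \<in> P) \<longrightarrow> f \<in> L2 \<longrightarrow>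
        (\<lambda>k. L2_norm (\<lambda>z. fs k z - f z)) \<longlonglongrightarrow> 0 \<longrightarrow> f \<in> P)"

end

theory Submission
  imports Defs "HOL-Computational_Algebra.Polynomial"
begin
lemma space_circ[simp]: "space circ = UNIV"
  by (simp add: circ_def)

lemma sets_circ[simp, measurable_cong]: "sets circ = sets borel"
  by (simp add: circ_def)

lemma measurable_circ_iff[simp]: "measurable circ N = measurable borel N"
  by (simp add: circ_def)

lemma cis_meas[measurable]: "cis \<in> borel_measurable (restrict_space lborel S)"
  by (rule measurable_restrict_space1) (simp add: borel_measurable_continuous_onI continuous_on_cis continuous_on_id)

lemma emeasure_circ_UNIV: "emeasure circ UNIV = ennreal (2*pi)"
proof -
  have "emeasure circ UNIV = emeasure (restrict_space lborel {0..<2*pi}) ({0..<2*pi})"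
    unfolding circ_def by (subst emeasure_distr) (auto simp: space_restrict_space)
  also have "\<dots> = emeasure lborel {0..<2*pi}"
    by (subst emeasure_restrict_space) auto
  also have "\<dots> = ennreal (2*pi)" by simp
  finally show ?thesis .
qed

interpretation circ: finite_measure circ
  by (rule finite_measureI) (simp add: emeasure_circ_UNIV)

lemma AE_circ_norm: "AE z in circ. norm z = 1"
  unfolding circ_def
  by (subst AE_distr_iff) (auto)

lemma circ_integral:
  fixes f :: "complex \<Rightarrow> 'b::{banach, second_countable_topology}"
  assumes [measurable]: "f \<in> borel_measurable borel"
  shows "integral\<^sup>L circ f = (LBINT t=0..2*pi. f (cis t))"
proof -
  have "integral\<^sup>L circ f = integral\<^sup>L (restrict_space lborel {0..<2*pi}) (\<lambda>t. f (cis t))"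
    unfolding circ_def by (subst integral_distr) auto
  also have "\<dots> = (LBINT t:{0..<2*pi}. f (cis t))"
    by (subst integral_restrict_space) (auto simp: set_lebesgue_integral_def)
  also have "\<dots> = (LBINT t=0..2*pi. f (cis t))"
    using interval_integral_Ico[of 0 "2*pi" "\<lambda>t. f (cis t)"] by (simp add: zero_ereal_def)
  finally show ?thesis .
qed

lemma deriv_cis_k:
  assumes "k \<noteq> 0"
  shows "((\<lambda>t. cis (k*t) / (\<i> * of_real k)) has_vector_derivative cis (k*t)) (at t within S)"
proof -
  have "((\<lambda>t. cis (k*t)) has_derivative (\<lambda>x. (k*x) *\<^sub>R (\<i> * cis (k*t)))) (at t within S)"
    by (intro has_derivative_cis derivative_intros)
  then have "((\<lambda>t. cis (k*t) * inverse (\<i> * of_real k)) has_derivative (\<lambda>x. ((k*x) *\<^sub>R (\<i> * cis (k*t))) * inverse (\<i> * of_real k))) (at t within S)"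
    by (rule has_derivative_mult_left)
  then have "((\<lambda>t. cis (k*t) / (\<i> * of_real k)) has_derivative (\<lambda>x. ((k*x) *\<^sub>R (\<i> * cis (k*t))) / (\<i> * of_real k))) (at t within S)"
    by (simp add: divide_inverse)
  moreover have "(\<lambda>x. ((k*x) *\<^sub>R (\<i> * cis (k*t))) / (\<i> * of_real k)) = (\<lambda>x. x *\<^sub>R cis (k*t))"
    using assms by (auto simp: scaleR_conv_of_real field_simps)
  ultimately show ?thesis unfolding has_vector_derivative_def by simp
qed

lemma circ_integral_power:
  assumes "k \<ge> 1"
  shows "(\<integral>z. z^k \<partial>circ) = (0::complex)"
proof -
  have "(\<integral>z. z^k \<partial>circ) = (LBINT t=0..2*pi. cis t ^ k)"
    by (rule circ_integral) auto
  also have "\<dots> = (LBINT t=0..2*pi. cis (real k * t))"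
  proof -
    have "(\<lambda>t. cis t ^ k) = (\<lambda>t. cis (real k * t))" by (rule ext, rule Complex.DeMoivre)
    then show ?thesis by simp
  qed
  also have "\<dots> = cis (real k * (2*pi)) / (\<i> * of_real (real k)) - cis (real k * 0) / (\<i> * of_real (real k))"
  proof -
    have "(LBINT t=ereal 0..ereal (2*pi). cis (real k * t)) = cis (real k * (2*pi)) / (\<i> * of_real (real k)) - cis (real k * 0) / (\<i> * of_real (real k))"
      using assms
      by (intro interval_integral_FTC_finite deriv_cis_k continuous_intros) auto
    then show ?thesis by (simp add: zero_ereal_def)
  qed
  also have "\<dots> = 0"
  proof -
    have "cis (real k * (2*pi)) = 1"
      by (metis cis_2pi Complex.DeMoivre power_one mult.commute)
    then show ?thesis by simp
  qed
  finally show ?thesis .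
qed

lemma measure_circ_UNIV: "measure circ UNIV = 2*pi"
  using emeasure_circ_UNIV by (simp add: measure_def)

lemma circ_integral_const:
  fixes c :: "'b::{banach, second_countable_topology}"
  shows "(\<integral>z. c \<partial>circ) = (2*pi) *\<^sub>R c"
  by (simp add: measure_circ_UNIV)

definition sqint :: "'a measure \<Rightarrow> ('a \<Rightarrow> 'b::{banach, second_countable_topology}) \<Rightarrow> bool" where
  "sqint M f \<longleftrightarrow> f \<in> borel_measurable M \<and> integrable M (\<lambda>x. (norm (f x))^2)"

definition gN :: "'a measure \<Rightarrow> ('a \<Rightarrow> 'b::{banach, second_countable_topology}) \<Rightarrow> real" where
  "gN M f = sqrt (\<integral>x. (norm (f x))^2 \<partial>M)"

lemma gN_nonneg: "gN M f \<ge> 0"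
  unfolding gN_def by (simp add: integral_nonneg_AE)

lemma int_prod_le:
  fixes a b :: "'a \<Rightarrow> real"
  assumes [measurable]: "a \<in> borel_measurable M" "b \<in> borel_measurable M"
    and nn: "\<And>x. a x \<ge> 0" "\<And>x. b x \<ge> 0"
    and ia: "integrable M (\<lambda>x. (a x)^2)" and ib: "integrable M (\<lambda>x. (b x)^2)"
  shows "integrable M (\<lambda>x. a x * b x)"
    and "(\<integral>x. a x * b x \<partial>M) \<le> sqrt (\<integral>x. (a x)^2 \<partial>M) * sqrt (\<integral>x. (b x)^2 \<partial>M)"
proof -
  have ptw: "\<bar>a x * b x\<bar> \<le> (a x)^2 + (b x)^2" for x
  proof -
    have "0 \<le> (a x - b x)^2" by simp
    then have h2: "2 * (a x * b x) \<le> (a x)^2 + (b x)^2" by (simp add: power2_eq_square algebra_simps)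
    have h1: "a x * b x \<ge> 0" using nn[of x] by simp
    show ?thesis using h1 h2 by (simp only: abs_of_nonneg[OF h1])
  qed
  show iab: "integrable M (\<lambda>x. a x * b x)"
    by (rule Bochner_Integration.integrable_bound[OF Bochner_Integration.integrable_add[OF ia ib]]) (use ptw in auto)
  define A where "A = (\<integral>x. (a x)^2 \<partial>M)"
  define B where "B = (\<integral>x. (b x)^2 \<partial>M)"
  have A0: "A \<ge> 0" "B \<ge> 0" unfolding A_def B_def by (auto intro: integral_nonneg_AE)
  have amgm: "(\<integral>x. a x * b x \<partial>M) \<le> (t * A + B / t) / 2" if t: "t > 0" for t
  proof -
    have "(\<integral>x. a x * b x \<partial>M) \<le> (\<integral>x. (t * (a x)^2 + (b x)^2 / t) / 2 \<partial>M)"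
    proof (rule integral_mono[OF iab])
      show "integrable M (\<lambda>x. (t * (a x)\<^sup>2 + (b x)\<^sup>2 / t) / 2)"
        using ia ib by auto
      fix x
      have "0 \<le> (t * a x - b x)^2 / t" using t by simp
      then show "a x * b x \<le> (t * (a x)\<^sup>2 + (b x)\<^sup>2 / t) / 2"
        using t by (simp add: power2_eq_square field_simps)
    qed
    also have "\<dots> = (t * A + B / t) / 2"
      unfolding A_def B_def using ia ib by simp
    finally show ?thesis .
  qed
  show "(\<integral>x. a x * b x \<partial>M) \<le> sqrt (\<integral>x. (a x)^2 \<partial>M) * sqrt (\<integral>x. (b x)^2 \<partial>M)"
  proof (cases "A = 0 \<or> B = 0")
    case True
    then have "AE x in M. a x * b x = 0"
    proof
      assume "A = 0"
      then have "AE x in M. (a x)^2 = 0"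
        unfolding A_def using ia by (subst (asm) integral_nonneg_eq_0_iff_AE) auto
      then show ?thesis by auto
    next
      assume "B = 0"
      then have "AE x in M. (b x)^2 = 0"
        unfolding B_def using ib by (subst (asm) integral_nonneg_eq_0_iff_AE) auto
      then show ?thesis by auto
    qed
    then have "(\<integral>x. a x * b x \<partial>M) = 0"
      by (simp add: integral_eq_zero_AE)
    then show ?thesis by simp
  next
    case False
    then have pos: "A > 0" "B > 0" using A0 by auto
    define t where "t = sqrt B / sqrt A"
    have t: "t > 0" using pos unfolding t_def by simp
    have "t * A = sqrt A * sqrt B"
      unfolding t_def using pos by (simp add: field_simps)
    moreover have "B / t = sqrt A * sqrt B"
      unfolding t_def using pos by (simp add: field_simps)
    ultimately show ?thesis using amgm[OF t] unfolding A_def B_def by simp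
  qed
qed

lemma sqint_add:
  assumes f: "sqint M f" and g: "sqint M g"
  shows "sqint M (\<lambda>x. f x + g x)"
proof -
  have [measurable]: "f \<in> borel_measurable M" "g \<in> borel_measurable M" using f g by (auto simp: sqint_def)
  have i: "integrable M (\<lambda>x. 2 * (norm (f x))^2 + 2 * (norm (g x))^2)"
    using f g by (auto simp: sqint_def)
  have "(norm (f x + g x))^2 \<le> 2 * (norm (f x))^2 + 2 * (norm (g x))^2" for x
  proof -
    have "norm (f x + g x) \<le> norm (f x) + norm (g x)" by (rule norm_triangle_ineq)
    then have "(norm (f x + g x))^2 \<le> (norm (f x) + norm (g x))^2"
      by (rule power_mono) simp
    also have "\<dots> \<le> 2 * (norm (f x))^2 + 2 * (norm (g x))^2"
      using sum_squares_ge_zero[of "norm (f x) - norm (g x)" 0]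
      by (simp add: power2_eq_square algebra_simps)
    finally show ?thesis .
  qed
  then have "integrable M (\<lambda>x. (norm (f x + g x))^2)"
    by (intro Bochner_Integration.integrable_bound[OF i]) auto
  then show ?thesis by (simp add: sqint_def)
qed

lemma minkowski:
  assumes f: "sqint M f" and g: "sqint M g"
  shows "gN M (\<lambda>x. f x + g x) \<le> gN M f + gN M g"
proof -
  have [measurable]: "f \<in> borel_measurable M" "g \<in> borel_measurable M" using f g by (auto simp: sqint_def)
  have iff: "integrable M (\<lambda>x. (norm (f x))^2)" and igg: "integrable M (\<lambda>x. (norm (g x))^2)"
    using f g by (auto simp: sqint_def)
  have ifg: "integrable M (\<lambda>x. (norm (f x + g x))^2)"
    using sqint_add[OF f g] by (auto simp: sqint_def)
  note cs = int_prod_le[of "\<lambda>x. norm (f x)" M "\<lambda>x. norm (g x)", OF _ _ _ _ iff igg]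
  have "(\<integral>x. (norm (f x + g x))^2 \<partial>M) \<le> (\<integral>x. (norm (f x))^2 + 2 * (norm (f x) * norm (g x)) + (norm (g x))^2 \<partial>M)"
  proof (rule integral_mono[OF ifg])
    show "integrable M (\<lambda>x. (norm (f x))\<^sup>2 + 2 * (norm (f x) * norm (g x)) + (norm (g x))\<^sup>2)"
      using iff igg cs(1) by auto
    fix x
    have "norm (f x + g x) \<le> norm (f x) + norm (g x)" by (rule norm_triangle_ineq)
    then have "(norm (f x + g x))^2 \<le> (norm (f x) + norm (g x))^2"
      by (rule power_mono) simp
    then show "(norm (f x + g x))^2 \<le> (norm (f x))\<^sup>2 + 2 * (norm (f x) * norm (g x)) + (norm (g x))\<^sup>2"
      by (simp add: power2_eq_square algebra_simps)
  qed
  also have "\<dots> = (\<integral>x. (norm (f x))^2 \<partial>M) + 2 * (\<integral>x. norm (f x) * norm (g x) \<partial>M) + (\<integral>x. (norm (g x))^2 \<partial>M)"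
    using iff igg cs(1) by simp
  also have "\<dots> \<le> (gN M f)^2 + 2 * (gN M f * gN M g) + (gN M g)^2"
    using cs(2) iff igg unfolding gN_def
    by (simp add: integral_nonneg_AE)
  also have "\<dots> = (gN M f + gN M g)^2" by (simp add: power2_eq_square algebra_simps)
  finally have "(gN M (\<lambda>x. f x + g x))^2 \<le> (gN M f + gN M g)^2"
    unfolding gN_def[of M "\<lambda>x. f x + g x"] by (simp add: integral_nonneg_AE)
  then show ?thesis
    using gN_nonneg[of M f] gN_nonneg[of M g] by (meson power2_le_imp_le add_nonneg_nonneg)
qed

lemma sqint_meas: "sqint M f \<Longrightarrow> f \<in> borel_measurable M"
  by (simp add: sqint_def)

lemma sqint_int: "sqint M f \<Longrightarrow> integrable M (\<lambda>x. (norm (f x))^2)"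
  by (simp add: sqint_def)

lemma gN_cong_AE:
  assumes "AE x in M. f x = g x" and [measurable]: "f \<in> borel_measurable M" "g \<in> borel_measurable M"
  shows "gN M f = gN M g"
proof -
  have "(\<integral>x. (norm (f x))^2 \<partial>M) = (\<integral>x. (norm (g x))^2 \<partial>M)"
    by (rule integral_cong_AE) (use assms in auto)
  then show ?thesis by (simp add: gN_def)
qed

lemma gN_zero_iff:
  assumes "sqint M f"
  shows "gN M f = 0 \<longleftrightarrow> (AE x in M. f x = 0)"
proof -
  have [measurable]: "f \<in> borel_measurable M" using assms by (simp add: sqint_def)
  have "gN M f = 0 \<longleftrightarrow> (\<integral>x. (norm (f x))^2 \<partial>M) = 0"
    by (simp add: gN_def integral_nonneg_AE)
  also have "\<dots> \<longleftrightarrow> (AE x in M. (norm (f x))^2 = 0)"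
    using assms by (subst integral_nonneg_eq_0_iff_AE) (auto simp: sqint_def)
  also have "\<dots> \<longleftrightarrow> (AE x in M. f x = 0)" by simp
  finally show ?thesis .
qed

lemma gN_scaleR: "gN M (\<lambda>x. c *\<^sub>R f x) = \<bar>c\<bar> * gN M f"
proof -
  have "(\<integral>x. (norm (c *\<^sub>R f x))^2 \<partial>M) = c^2 * (\<integral>x. (norm (f x))^2 \<partial>M)"
    by (simp add: power_mult_distrib)
  then show ?thesis by (simp add: gN_def real_sqrt_mult)
qed

lemma gN_minus_commute: "gN M (\<lambda>x. f x - g x) = gN M (\<lambda>x. g x - f x)"
  by (simp add: gN_def norm_minus_commute)

lemma sqint_scaleR: "sqint M f \<Longrightarrow> sqint M (\<lambda>x. c *\<^sub>R f x)"
  by (auto simp: sqint_def power_mult_distrib)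

lemma sqint_minus: "sqint M f \<Longrightarrow> sqint M (\<lambda>x. - f x)"
  by (auto simp: sqint_def)

lemma sqint_diff: "sqint M f \<Longrightarrow> sqint M g \<Longrightarrow> sqint M (\<lambda>x. f x - g x)"
  using sqint_add[of M f "\<lambda>x. - g x"] sqint_minus[of M g] by simp

lemma sqint_zero: "sqint M (\<lambda>x. 0)"
  by (simp add: sqint_def)

lemma sqint_sum: "(\<And>i. i \<in> I \<Longrightarrow> sqint M (f i)) \<Longrightarrow> sqint M (\<lambda>x. \<Sum>i\<in>I. f i x)"
  by (induction I rule: infinite_finite_induct) (auto simp: sqint_zero intro!: sqint_add)

lemma gN_sum_le: "(\<And>i. i \<in> I \<Longrightarrow> sqint M (f i)) \<Longrightarrow> gN M (\<lambda>x. \<Sum>i\<in>I. f i x) \<le> (\<Sum>i\<in>I. gN M (f i))"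
proof (induction I rule: infinite_finite_induct)
  case (infinite A)
  then show ?case by (simp add: gN_def)
next
  case empty
  then show ?case by (simp add: gN_def)
next
  case (insert a A)
  have "gN M (\<lambda>x. \<Sum>i\<in>insert a A. f i x) = gN M (\<lambda>x. f a x + (\<Sum>i\<in>A. f i x))"
    using insert by simp
  also have "\<dots> \<le> gN M (f a) + gN M (\<lambda>x. \<Sum>i\<in>A. f i x)"
    by (rule minkowski) (use insert in \<open>auto intro!: sqint_sum\<close>)
  also have "\<dots> \<le> gN M (f a) + (\<Sum>i\<in>A. gN M (f i))"
    using insert by simp
  finally show ?case using insert by simp
qed

lemma gN_triangle3:
  assumes "sqint M f" "sqint M g" "sqint M h"
  shows "gN M (\<lambda>x. f x - h x) \<le> gN M (\<lambda>x. f x - g x) + gN M (\<lambda>x. g x - h x)"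
  using minkowski[of M "\<lambda>x. f x - g x" "\<lambda>x. g x - h x"] assms by (simp add: sqint_diff)

lemma (in finite_measure) sqint_bounded:
  assumes [measurable]: "f \<in> borel_measurable M" and "AE x in M. norm (f x) \<le> B"
  shows "sqint M f"
proof -
  have "integrable M (\<lambda>x. (norm (f x))^2)"
  proof (rule Bochner_Integration.integrable_bound[of M "\<lambda>x. B^2"])
    show "AE x in M. norm ((norm (f x))\<^sup>2) \<le> norm (B^2)"
      using assms(2) by eventually_elim (auto intro!: power_mono)
  qed auto
  then show ?thesis by (simp add: sqint_def)
qed

lemma gN_dominated:
  fixes s :: "nat \<Rightarrow> 'a \<Rightarrow> 'b::{banach, second_countable_topology}"
  assumes s: "\<And>i. sqint M (s i)" and g: "sqint M g" and w: "integrable M w"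
    and lim: "AE x in M. (\<lambda>i. s i x) \<longlonglongrightarrow> g x"
    and bnd: "\<And>i. AE x in M. (norm (s i x - g x))^2 \<le> w x"
  shows "(\<lambda>i. gN M (\<lambda>x. s i x - g x)) \<longlonglongrightarrow> 0"
proof -
  have [measurable]: "g \<in> borel_measurable M" "\<And>i. s i \<in> borel_measurable M"
    using s g by (auto simp: sqint_def)
  have "(\<lambda>i. \<integral>x. (norm (s i x - g x))^2 \<partial>M) \<longlonglongrightarrow> (\<integral>x. (\<lambda>x. 0::real) x \<partial>M)"
  proof (rule integral_dominated_convergence[where w=w])
    show "AE x in M. (\<lambda>i. (norm (s i x - g x))\<^sup>2) \<longlonglongrightarrow> 0"
      using lim
    proof eventually_elim
      case (elim x)
      then have "(\<lambda>i. s i x - g x) \<longlonglongrightarrow> 0"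
        using LIM_zero by blast
      then have "(\<lambda>i. norm (s i x - g x)) \<longlonglongrightarrow> 0"
        using tendsto_norm_zero by blast
      then show ?case using tendsto_power[of _ 0 _ 2] by fastforce
    qed
    show "AE x in M. norm ((norm (s i x - g x))\<^sup>2) \<le> w x" for i
      using bnd[of i] by auto
  qed (use w in auto)
  then have "(\<lambda>i. sqrt (\<integral>x. (norm (s i x - g x))^2 \<partial>M)) \<longlonglongrightarrow> sqrt 0"
    by (intro tendsto_real_sqrt) simp
  then show ?thesis by (simp add: gN_def)
qed

lemma sqint_norm: "sqint M h \<Longrightarrow> sqint M (\<lambda>x. norm (h x))"
  by (auto simp: sqint_def intro: borel_measurable_norm)

lemma gN_norm: "gN M (\<lambda>x. norm (h x)) = gN M h"
  by (simp add: gN_def)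

theorem sqint_complete:
  fixes f :: "nat \<Rightarrow> 'a \<Rightarrow> 'b::{banach, second_countable_topology}"
  assumes f: "\<And>i. sqint M (f i)"
    and cauchy: "\<And>e. e > 0 \<Longrightarrow> \<exists>K. \<forall>m\<ge>K. \<forall>n\<ge>K. gN M (\<lambda>x. f m x - f n x) < e"
  shows "\<exists>g. sqint M g \<and> (\<lambda>i. gN M (\<lambda>x. f i x - g x)) \<longlonglongrightarrow> 0"
proof -
  have [measurable]: "\<And>i. f i \<in> borel_measurable M" using f by (simp add: sqint_def)
  have "\<forall>j. \<exists>K. \<forall>m\<ge>K. \<forall>n\<ge>K. gN M (\<lambda>x. f m x - f n x) < (1/2::real)^j"
    using cauchy by simp
  then obtain K where K: "\<And>j m n. m \<ge> K j \<Longrightarrow> n \<ge> K j \<Longrightarrow> gN M (\<lambda>x. f m x - f n x) < (1/2::real)^j"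
    by metis
  define \<phi> where "\<phi> = rec_nat (K 0) (\<lambda>j p. max (K (Suc j)) (Suc p))"
  have \<phi>0: "\<phi> 0 = K 0" and \<phi>S: "\<phi> (Suc j) = max (K (Suc j)) (Suc (\<phi> j))" for j
    by (simp_all add: \<phi>_def)
  have \<phi>K: "\<phi> j \<ge> K j" for j by (cases j) (auto simp: \<phi>0 \<phi>S)
  have \<phi>mono: "\<phi> j \<le> \<phi> (Suc j)" for j by (simp add: \<phi>S)
  define s where "s j = f (\<phi> j)" for j
  define d where "d j x = s (Suc j) x - s j x" for j x
  have s_sq: "sqint M (s j)" for j unfolding s_def by (rule f)
  have [measurable]: "s j \<in> borel_measurable M" for j using s_sq by (simp add: sqint_def)
  have [measurable]: "d j \<in> borel_measurable M" for j unfolding d_def by measurable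
  have d_sq: "sqint M (d j)" for j unfolding d_def by (intro sqint_diff s_sq)
  have d_small: "gN M (d j) < (1/2)^j" for j
    unfolding d_def s_def using \<phi>K[of j] \<phi>mono[of j] by (intro K) auto
  define P where "P m x = (\<Sum>j<m. norm (d j x))" for m x
  have [measurable]: "P m \<in> borel_measurable M" for m unfolding P_def by measurable
  have P_nonneg: "P m x \<ge> 0" for m x unfolding P_def by (simp add: sum_nonneg)
  have P_mono: "P m x \<le> P (Suc m) x" for m x unfolding P_def by simp
  have P_sq: "sqint M (P m)" for m
    unfolding P_def by (intro sqint_sum sqint_norm d_sq)
  have P_gN: "gN M (P m) \<le> 2" for m
  proof -
    have "gN M (P m) \<le> (\<Sum>j<m. gN M (\<lambda>x. norm (d j x)))"
      unfolding P_def by (intro gN_sum_le sqint_norm d_sq)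
    also have "\<dots> = (\<Sum>j<m. gN M (d j))" by (simp add: gN_norm)
    also have "\<dots> \<le> (\<Sum>j<m. (1/2::real)^j)"
      by (intro sum_mono less_imp_le d_small)
    also have "\<dots> \<le> 2"
    proof -
      have "(\<Sum>j<m. (1/2::real)^j) \<le> (\<Sum>j. (1/2::real)^j)"
        by (intro sum_le_suminf) (auto simp: summable_geometric)
      also have "\<dots> = 2" using suminf_geometric[of "1/2::real"] by simp
      finally show ?thesis .
    qed
    finally show ?thesis .
  qed
  have P_int: "integrable M (\<lambda>x. (P m x)^2)" for m
    using P_sq[of m] P_nonneg by (simp add: sqint_def)
  have P_int_le: "(\<integral>x. (P m x)^2 \<partial>M) \<le> 4" for m
  proof -
    have "(\<integral>x. (P m x)^2 \<partial>M) = (gN M (P m))^2"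
      unfolding gN_def using P_nonneg by (simp add: integral_nonneg_AE)
    also have "\<dots> \<le> 2^2"
      using P_gN[of m] gN_nonneg[of M "P m"] by (intro power_mono) auto
    finally show ?thesis by simp
  qed
  define Q where "Q x = (SUP m. ennreal ((P m x)^2))" for x
  have [measurable]: "Q \<in> borel_measurable M" unfolding Q_def by measurable
  have incQ: "incseq (\<lambda>m x. ennreal ((P m x)^2))"
    by (intro incseq_SucI le_funI ennreal_leI power_mono P_mono P_nonneg)
  have "(\<integral>\<^sup>+x. Q x \<partial>M) = (SUP m. (\<integral>\<^sup>+x. ennreal ((P m x)^2) \<partial>M))"
    unfolding Q_def by (rule nn_integral_monotone_convergence_SUP[OF incQ]) measurable
  also have "\<dots> \<le> 4"
  proof (rule SUP_least)
    fix m
    have "(\<integral>\<^sup>+x. ennreal ((P m x)^2) \<partial>M) = ennreal (\<integral>x. (P m x)^2 \<partial>M)"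
      by (rule nn_integral_eq_integral[OF P_int]) auto
    also have "\<dots> \<le> 4" using P_int_le[of m] by (metis ennreal_leI ennreal_numeral)
    finally show "(\<integral>\<^sup>+x. ennreal ((P m x)^2) \<partial>M) \<le> 4" .
  qed
  finally have Qint: "(\<integral>\<^sup>+x. Q x \<partial>M) \<le> 4" .
  have "(\<integral>\<^sup>+x. Q x \<partial>M) \<noteq> \<infinity>"
    using Qint by (metis infinity_ennreal_def top_unique top_neq_numeral)
  then have AEQ: "AE x in M. Q x \<noteq> \<infinity>"
    by (intro nn_integral_PInf_AE) auto
  define G where "G x = lim (\<lambda>m. P m x)" for x
  have [measurable]: "G \<in> borel_measurable M" unfolding G_def by measurable
  define F where "F x = lim (\<lambda>j. s j x)" for x
  have [measurable]: "F \<in> borel_measurable M" unfolding F_def by measurable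
  have good: "summable (\<lambda>j. norm (d j x)) \<and> (\<lambda>m. P m x) \<longlonglongrightarrow> G x \<and> ennreal ((G x)^2) = Q x
      \<and> (\<lambda>j. s j x) \<longlonglongrightarrow> F x \<and> (\<forall>j. norm (s j x - F x) \<le> G x)"
    if Qx: "Q x \<noteq> \<infinity>" for x
  proof -
    have bnd: "P m x \<le> sqrt (enn2real (Q x))" for m
    proof -
      have "ennreal ((P m x)^2) \<le> Q x" unfolding Q_def by (rule SUP_upper) auto
      then have "enn2real (ennreal ((P m x)^2)) \<le> enn2real (Q x)"
        using Qx by (intro enn2real_mono) (auto simp: top.not_eq_extremum)
      then have "(P m x)^2 \<le> enn2real (Q x)" by simp
      then show ?thesis using P_nonneg by (simp add: real_le_rsqrt)
    qed
    have sumd: "summable (\<lambda>j. norm (d j x))"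
      by (rule summableI_nonneg_bounded[where x="sqrt (enn2real (Q x))"]) (use bnd in \<open>auto simp: P_def\<close>)
    have PG: "(\<lambda>m. P m x) \<longlonglongrightarrow> G x"
    proof -
      have "(\<lambda>m. P m x) \<longlonglongrightarrow> (\<Sum>j. norm (d j x))"
        unfolding P_def using sumd by (intro summable_LIMSEQ)
      then have "convergent (\<lambda>m. P m x)" by (auto simp: convergent_def)
      then show ?thesis unfolding G_def by (simp add: convergent_LIMSEQ_iff)
    qed
    have GQ: "ennreal ((G x)^2) = Q x"
    proof -
      have "(\<lambda>m. ennreal ((P m x)^2)) \<longlonglongrightarrow> ennreal ((G x)^2)"
        by (intro tendsto_ennrealI tendsto_power PG)
      moreover have "(\<lambda>m. ennreal ((P m x)^2)) \<longlonglongrightarrow> Q x"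
        unfolding Q_def
        by (rule LIMSEQ_SUP) (intro incseq_SucI ennreal_leI power_mono P_mono P_nonneg)
      ultimately show ?thesis by (rule LIMSEQ_unique)
    qed
    have tele: "s j x = s 0 x + (\<Sum>i<j. d i x)" for j
      by (induction j) (auto simp: d_def)
    have sd: "summable (\<lambda>i. d i x)" by (rule summable_norm_cancel[OF sumd])
    have sF: "(\<lambda>j. s j x) \<longlonglongrightarrow> F x"
    proof -
      have "(\<lambda>j. s 0 x + (\<Sum>i<j. d i x)) \<longlonglongrightarrow> s 0 x + (\<Sum>i. d i x)"
        by (intro tendsto_add tendsto_const summable_LIMSEQ sd)
      then have "convergent (\<lambda>j. s j x)" unfolding tele[symmetric] by (auto simp: convergent_def)
      then show ?thesis unfolding F_def by (simp add: convergent_LIMSEQ_iff)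
    qed
    have PleG: "P m x \<le> G x" for m
      by (rule incseq_le[OF _ PG]) (intro incseq_SucI P_mono)
    have bndF: "norm (s j x - F x) \<le> G x" for j
    proof -
      have "(\<lambda>m. norm (s m x - s j x)) \<longlonglongrightarrow> norm (F x - s j x)"
        by (intro tendsto_norm tendsto_diff sF tendsto_const)
      moreover have "\<exists>N. \<forall>m\<ge>N. norm (s m x - s j x) \<le> G x"
      proof (intro exI allI impI)
        fix m assume "m \<ge> j"
        have "s m x - s j x = (\<Sum>i\<in>{j..<m}. d i x)"
          using \<open>m \<ge> j\<close>
        proof (induction m rule: dec_induct)
          case base
          then show ?case by simp
        next
          case (step m)
          then show ?case by (simp add: d_def algebra_simps)
        qed
        then have "norm (s m x - s j x) \<le> (\<Sum>i\<in>{j..<m}. norm (d i x))"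
          by (simp add: norm_sum)
        also have "\<dots> \<le> (\<Sum>i<m. norm (d i x))"
          by (intro sum_mono2) auto
        also have "\<dots> \<le> G x" using PleG[of m] by (simp add: P_def)
        finally show "norm (s m x - s j x) \<le> G x" .
      qed
      ultimately have "norm (F x - s j x) \<le> G x" by (rule LIMSEQ_le_const2)
      then show ?thesis by (simp add: norm_minus_commute)
    qed
    show ?thesis using sumd PG GQ sF bndF by blast
  qed
  have G2int: "integrable M (\<lambda>x. (G x)^2)"
  proof (rule integrableI_nonneg)
    have "(\<integral>\<^sup>+x. ennreal ((G x)^2) \<partial>M) = (\<integral>\<^sup>+x. Q x \<partial>M)"
    proof -
      have AEG: "AE x in M. ennreal ((G x)^2) = Q x"
        using AEQ by eventually_elim (use good in blast)
      show ?thesis by (rule nn_integral_cong_AE[OF AEG])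
    qed
    also have "\<dots> < \<infinity>"
      by (rule order_le_less_trans[OF Qint]) simp
    finally show "(\<integral>\<^sup>+x. ennreal ((G x)^2) \<partial>M) < \<infinity>" .
  qed auto
  have Fs0: "sqint M (\<lambda>x. F x - s 0 x)"
  proof -
    have "integrable M (\<lambda>x. (norm (F x - s 0 x))^2)"
    proof (rule Bochner_Integration.integrable_bound[OF G2int])
      show "AE x in M. norm ((norm (F x - s 0 x))\<^sup>2) \<le> norm ((G x)\<^sup>2)"
        using AEQ
      proof eventually_elim
        case (elim x)
        then have "norm (s 0 x - F x) \<le> G x" using good by blast
        then have "(norm (F x - s 0 x))^2 \<le> (G x)^2"
          by (intro power_mono) (auto simp: norm_minus_commute)
        then show ?case by simp
      qed
    qed measurable
    then show ?thesis by (simp add: sqint_def)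
  qed
  have F_sq: "sqint M F"
    using sqint_add[OF s_sq[of 0] Fs0] by simp
  have sconv: "(\<lambda>j. gN M (\<lambda>x. s j x - F x)) \<longlonglongrightarrow> 0"
  proof (rule gN_dominated[OF s_sq F_sq G2int])
    show "AE x in M. (\<lambda>i. s i x) \<longlonglongrightarrow> F x"
      using AEQ by eventually_elim (use good in blast)
    show "AE x in M. (norm (s i x - F x))\<^sup>2 \<le> (G x)^2" for i
      using AEQ
    proof eventually_elim
      case (elim x)
      then have "norm (s i x - F x) \<le> G x" using good by blast
      then show ?case by (intro power_mono) auto
    qed
  qed
  have "(\<lambda>i. gN M (\<lambda>x. f i x - F x)) \<longlonglongrightarrow> 0"
  proof (rule LIMSEQ_I)
    fix r :: real assume r: "r > 0"
    obtain J1 where J1': "\<forall>j\<ge>J1. norm (gN M (\<lambda>x. s j x - F x) - 0) < r/2"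
      using LIMSEQ_D[OF sconv, of "r/2"] r by auto
    have J1: "gN M (\<lambda>x. s j x - F x) < r/2" if "j \<ge> J1" for j
      using J1' that gN_nonneg[of M "\<lambda>x. s j x - F x"] by auto
    obtain J2 where J2: "(1/2::real)^J2 < r/2"
      using real_arch_pow_inv[of "r/2" "1/2::real"] r by auto
    define j where "j = max J1 J2"
    have "(1/2::real)^j \<le> (1/2)^J2" unfolding j_def by (intro power_decreasing) auto
    with J2 have j2: "(1/2::real)^j < r/2" by linarith
    show "\<exists>no. \<forall>n\<ge>no. norm (gN M (\<lambda>x. f n x - F x) - 0) < r"
    proof (intro exI allI impI)
      fix n assume n: "n \<ge> K j"
      have "gN M (\<lambda>x. f n x - F x) \<le> gN M (\<lambda>x. f n x - s j x) + gN M (\<lambda>x. s j x - F x)"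
        by (rule gN_triangle3) (auto intro: f s_sq F_sq)
      also have "gN M (\<lambda>x. f n x - s j x) < (1/2)^j"
        unfolding s_def using n \<phi>K[of j] by (intro K) auto
      also have "gN M (\<lambda>x. s j x - F x) < r/2"
        by (intro J1) (simp add: j_def)
      finally have "gN M (\<lambda>x. f n x - F x) < r" using j2 by linarith
      then show "norm (gN M (\<lambda>x. f n x - F x) - 0) < r"
        using gN_nonneg[of M "\<lambda>x. f n x - F x"] by simp
    qed
  qed
  then show ?thesis using F_sq by blast
qed

lemma measurable_smult[measurable]:
  fixes f :: "'a \<Rightarrow> complex" and g :: "'a \<Rightarrow> complex^'n::finite"
  assumes "f \<in> borel_measurable M" "g \<in> borel_measurable M"
  shows "(\<lambda>x. f x *s g x) \<in> borel_measurable M"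
proof -
  have "continuous_on UNIV (\<lambda>p::complex \<times> (complex^'n). fst p *s snd p)"
    unfolding vector_scalar_mult_def by (intro continuous_on_vec_lambda continuous_intros)
  then show ?thesis
    using borel_measurable_continuous_Pair[OF assms, of "\<lambda>a b. a *s b"] by simp
qed

lemma norm_smult: "norm (c *s (x::complex^'n::finite)) = norm c * norm x"
proof -
  have "norm (c *s x) = L2_set (\<lambda>i. norm c * norm (x $ i)) UNIV"
    by (simp add: norm_vec_def vector_scalar_mult_def norm_mult)
  also have "\<dots> = norm c * L2_set (\<lambda>i. norm (x $ i)) UNIV"
    by (simp add: L2_set_right_distrib)
  finally show ?thesis by (simp add: norm_vec_def)
qed

lemma bounded_linear_smult: "bounded_linear (\<lambda>x::complex^'n::finite. c *s x)"
proof (rule bounded_linear_intro[where K="norm c"])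
  show "c *s (x + y) = c *s x + c *s y" for x y by (simp add: vector_add_ldistrib)
  show "c *s (r *\<^sub>R x) = r *\<^sub>R (c *s x)" for r x
    by (simp add: vec_eq_iff scaleR_conv_of_real)
  show "norm (c *s x) \<le> norm x * norm c" for x by (simp add: norm_smult)
qed

lemma bounded_linear_smult_left: "bounded_linear (\<lambda>a::complex. a *s (v::complex^'n::finite))"
proof (rule bounded_linear_intro[where K="norm v"])
  show "(x + y) *s v = x *s v + y *s v" for x y by (simp add: vector_sadd_rdistrib)
  show "(r *\<^sub>R x) *s v = r *\<^sub>R (x *s v)" for r x
    by (simp add: vec_eq_iff vector_scalar_mult_def)
  show "norm (x *s v) \<le> norm x * norm v" for x by (simp add: norm_smult)
qed

lemma L2_sqint: "f \<in> L2 \<longleftrightarrow> sqint circ f"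
  by (simp add: L2_def sqint_def)

lemma L2_norm_gN: "L2_norm f = gN circ f"
  by (simp add: L2_norm_def gN_def)

lemma L2_meas: "f \<in> L2 \<Longrightarrow> f \<in> borel_measurable borel"
  by (simp add: L2_def)

lemma L2_add: "f \<in> L2 \<Longrightarrow> g \<in> L2 \<Longrightarrow> (\<lambda>z. f z + g z) \<in> L2"
  by (simp add: L2_sqint sqint_add)

lemma L2_diff: "f \<in> L2 \<Longrightarrow> g \<in> L2 \<Longrightarrow> (\<lambda>z. f z - g z) \<in> L2"
  by (simp add: L2_sqint sqint_diff)

lemma L2_zero: "(\<lambda>z. 0) \<in> L2"
  by (simp add: L2_sqint sqint_zero)

lemma L2_sum: "(\<And>i. i \<in> I \<Longrightarrow> f i \<in> L2) \<Longrightarrow> (\<lambda>z. \<Sum>i\<in>I. f i z) \<in> L2"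
  by (simp add: L2_sqint sqint_sum)

lemma L2_bounded:
  assumes "f \<in> borel_measurable borel" "AE z in circ. norm (f z) \<le> B"
  shows "f \<in> L2"
  unfolding L2_sqint by (rule circ.sqint_bounded) (use assms in auto)

lemma L2_mult:
  fixes f :: "complex \<Rightarrow> complex^'n::finite"
  assumes f: "f \<in> L2" and w[measurable]: "w \<in> borel_measurable borel" and B: "AE z in circ. norm (w z) \<le> B"
  shows "(\<lambda>z. w z *s f z) \<in> L2"
proof -
  have [measurable]: "f \<in> borel_measurable borel" using f by (simp add: L2_def)
  have "integrable circ (\<lambda>z. (norm (w z *s f z))^2)"
  proof (rule Bochner_Integration.integrable_bound[of circ "\<lambda>z. B^2 * (norm (f z))^2"])
    show "integrable circ (\<lambda>z. B\<^sup>2 * (norm (f z))\<^sup>2)" using f by (simp add: L2_def)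
    show "AE z in circ. norm ((norm (w z *s f z))\<^sup>2) \<le> norm (B\<^sup>2 * (norm (f z))\<^sup>2)"
      using B
    proof eventually_elim
      case (elim z)
      have "(norm (w z *s f z))^2 = (norm (w z))^2 * (norm (f z))^2"
        by (simp add: norm_smult power_mult_distrib)
      also have "\<dots> \<le> B^2 * (norm (f z))^2"
        using elim by (intro mult_right_mono power_mono) auto
      finally show ?case by simp
    qed
  qed measurable
  then show ?thesis by (simp add: L2_def)
qed

lemma L2_smult: "f \<in> L2 \<Longrightarrow> (\<lambda>z. c *s f z) \<in> L2"
  using L2_mult[of f "\<lambda>z. c" "norm c"] by simp

lemma L2_norm_mult_unimod:
  fixes f :: "complex \<Rightarrow> complex^'n::finite"
  assumes w: "AE z in circ. norm (w z) = 1" and [measurable]: "w \<in> borel_measurable borel" "f \<in> borel_measurable borel"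
  shows "L2_norm (\<lambda>z. w z *s f z) = L2_norm f"
proof -
  have "(\<integral>z. (norm (w z *s f z))^2 \<partial>circ) = (\<integral>z. (norm (f z))^2 \<partial>circ)"
    by (rule integral_cong_AE) (use w in \<open>auto simp: norm_smult\<close>)
  then show ?thesis by (simp add: L2_norm_def)
qed

lemma L2_norm_smult: "L2_norm (\<lambda>z. c *s f z) = norm c * L2_norm f"
proof -
  have "(\<integral>z. (norm (c *s f z))^2 \<partial>circ) = (norm c)^2 * (\<integral>z. (norm (f z))^2 \<partial>circ)"
    by (simp add: norm_smult power_mult_distrib)
  then show ?thesis by (simp add: L2_norm_def real_sqrt_mult)
qed

lemma L2_norm_nonneg: "L2_norm f \<ge> 0"
  by (simp add: L2_norm_gN gN_nonneg)

lemma L2_norm_triangle: "f \<in> L2 \<Longrightarrow> g \<in> L2 \<Longrightarrow> L2_norm (\<lambda>z. f z + g z) \<le> L2_norm f + L2_norm g"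
  by (simp add: L2_norm_gN L2_sqint minkowski)

lemma L2_norm_triangle3: "f \<in> L2 \<Longrightarrow> g \<in> L2 \<Longrightarrow> h \<in> L2 \<Longrightarrow>
   L2_norm (\<lambda>z. f z - h z) \<le> L2_norm (\<lambda>z. f z - g z) + L2_norm (\<lambda>z. g z - h z)"
  by (simp add: L2_norm_gN L2_sqint gN_triangle3)

lemma L2_norm_commute: "L2_norm (\<lambda>z. f z - g z) = L2_norm (\<lambda>z. g z - f z)"
  unfolding L2_norm_gN by (rule gN_minus_commute)

lemma L2_norm_zero_iff: "f \<in> L2 \<Longrightarrow> L2_norm f = 0 \<longleftrightarrow> (AE z in circ. f z = 0)"
  by (simp add: L2_norm_gN L2_sqint gN_zero_iff)

lemma L2_norm_cong_AE: "AE z in circ. f z = g z \<Longrightarrow> f \<in> L2 \<Longrightarrow> g \<in> L2 \<Longrightarrow> L2_norm f = L2_norm g"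
  unfolding L2_norm_gN by (rule gN_cong_AE) (auto simp: L2_def)

lemma L2_integrable:
  fixes f :: "complex \<Rightarrow> complex^'n::finite"
  assumes f: "f \<in> L2"
  shows "integrable circ f"
proof (rule Bochner_Integration.integrable_bound[of circ "\<lambda>z. 1 + (norm (f z))^2"])
  show "integrable circ (\<lambda>z. 1 + (norm (f z))\<^sup>2)" using f by (simp add: L2_def)
  show "f \<in> borel_measurable circ" using f by (simp add: L2_def)
  show "AE z in circ. norm (f z) \<le> norm (1 + (norm (f z))\<^sup>2)"
  proof (rule AE_I2)
    fix z
    have "norm (f z) \<le> 1 + (norm (f z))^2"
    proof (cases "norm (f z) \<le> 1")
      case True then show ?thesis by (simp add: add_increasing2)
    next
      case False
      then have "norm (f z) \<le> norm (f z) * norm (f z)" by (simp add: mult_le_cancel_left1)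
      then show ?thesis by (simp add: power2_eq_square)
    qed
    then show "norm (f z) \<le> norm (1 + (norm (f z))\<^sup>2)" by simp
  qed
qed

lemma L1_le_L2:
  fixes g :: "complex \<Rightarrow> complex^'n::finite"
  assumes g: "g \<in> L2"
  shows "(\<integral>z. norm (g z) \<partial>circ) \<le> sqrt (2*pi) * L2_norm g"
proof -
  have [measurable]: "g \<in> borel_measurable borel" using g by (simp add: L2_def)
  have "(\<integral>z. norm (g z) * 1 \<partial>circ) \<le> sqrt (\<integral>z. (norm (g z))^2 \<partial>circ) * sqrt (\<integral>z. 1^2 \<partial>circ)"
    by (rule int_prod_le(2)) (use g in \<open>auto simp: L2_def\<close>)
  then show ?thesis by (simp add: L2_norm_def measure_circ_UNIV mult.commute)
qed

lemma Hplus_L2: "f \<in> Hplus \<Longrightarrow> f \<in> L2"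
  by (simp add: Hplus_def)

lemma AE_circ_pow: "AE z in circ. norm (z^m) \<le> (1::real)"
  using AE_circ_norm by eventually_elim (simp add: norm_power)

lemma L2_zpow: "f \<in> L2 \<Longrightarrow> (\<lambda>z. z^m *s f z) \<in> L2"
  by (rule L2_mult[OF _ _ AE_circ_pow]) auto

lemma int_zpow: "f \<in> L2 \<Longrightarrow> integrable circ (\<lambda>z. z^m *s f z)"
  by (intro L2_integrable L2_zpow)

lemma HplusI: "f \<in> L2 \<Longrightarrow> (\<And>m. m \<ge> 1 \<Longrightarrow> (\<integral>z. (z^m) *s f z \<partial>circ) = 0) \<Longrightarrow> f \<in> Hplus"
  by (simp add: Hplus_def)

lemma HplusD: "f \<in> Hplus \<Longrightarrow> m \<ge> 1 \<Longrightarrow> (\<integral>z. (z^m) *s f z \<partial>circ) = 0"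
  by (simp add: Hplus_def)

lemma Hplus_zero: "(\<lambda>z. 0) \<in> Hplus"
  by (rule HplusI) (auto simp: L2_zero)

lemma Hplus_add:
  assumes "f \<in> Hplus" "g \<in> Hplus"
  shows "(\<lambda>z. f z + g z) \<in> Hplus"
proof (rule HplusI)
  show "(\<lambda>z. f z + g z) \<in> L2" using assms by (intro L2_add Hplus_L2)
  fix m :: nat assume m: "m \<ge> 1"
  have "(\<integral>z. z^m *s (f z + g z) \<partial>circ) = (\<integral>z. z^m *s f z + z^m *s g z \<partial>circ)"
    by (simp add: vector_add_ldistrib)
  also have "\<dots> = (\<integral>z. z^m *s f z \<partial>circ) + (\<integral>z. z^m *s g z \<partial>circ)"
    using assms by (intro Bochner_Integration.integral_add int_zpow Hplus_L2)
  also have "\<dots> = 0" using assms m by (simp add: HplusD)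
  finally show "(\<integral>z. z^m *s (f z + g z) \<partial>circ) = 0" .
qed

lemma Hplus_smult:
  assumes "f \<in> Hplus"
  shows "(\<lambda>z. c *s f z) \<in> Hplus"
proof (rule HplusI)
  show "(\<lambda>z. c *s f z) \<in> L2" using assms by (intro L2_smult Hplus_L2)
  fix m :: nat assume m: "m \<ge> 1"
  have "(\<integral>z. z^m *s (c *s f z) \<partial>circ) = (\<integral>z. c *s (z^m *s f z) \<partial>circ)"
    by (simp add: vector_smult_assoc mult.commute)
  also have "\<dots> = c *s (\<integral>z. z^m *s f z \<partial>circ)"
    using assms by (intro integral_bounded_linear[OF bounded_linear_smult] int_zpow Hplus_L2)
  also have "\<dots> = 0" using assms m by (simp add: HplusD)
  finally show "(\<integral>z. z^m *s (c *s f z) \<partial>circ) = 0" .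
qed

lemma Hplus_diff: "f \<in> Hplus \<Longrightarrow> g \<in> Hplus \<Longrightarrow> (\<lambda>z. f z - g z) \<in> Hplus"
  using Hplus_add[of f "\<lambda>z. (-1) *s g z"] Hplus_smult[of g "-1"]
  by (simp add: vector_sneg_minus1[symmetric])

lemma Hplus_sum: "(\<And>i. i \<in> I \<Longrightarrow> f i \<in> Hplus) \<Longrightarrow> (\<lambda>z. \<Sum>i\<in>I. f i z) \<in> Hplus"
  by (induction I rule: infinite_finite_induct) (auto simp: Hplus_zero intro!: Hplus_add)

lemma Hplus_cong:
  assumes f: "f \<in> Hplus" and g[measurable]: "g \<in> borel_measurable borel" and ae: "AE z in circ. f z = g z"
  shows "g \<in> Hplus"
proof (rule HplusI)
  have [measurable]: "f \<in> borel_measurable borel" using f by (simp add: Hplus_def L2_def)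
  have "integrable circ (\<lambda>z. (norm (g z))^2)"
  proof (rule integrable_cong_AE_imp[of _ "\<lambda>z. (norm (f z))^2"])
    show "integrable circ (\<lambda>z. (norm (f z))^2)" using f by (simp add: Hplus_def L2_def)
    show "AE z in circ. (norm (f z))^2 = (norm (g z))^2" using ae by auto
  qed measurable
  then show "g \<in> L2" by (simp add: L2_def)
  fix m :: nat assume m: "m \<ge> 1"
  have "(\<integral>z. z^m *s g z \<partial>circ) = (\<integral>z. z^m *s f z \<partial>circ)"
    by (rule integral_cong_AE) (use ae in auto)
  then show "(\<integral>z. z^m *s g z \<partial>circ) = 0" using f m by (simp add: HplusD)
qed

lemma Hplus_mult_zpow:
  assumes "f \<in> Hplus"
  shows "(\<lambda>z. z^k *s f z) \<in> Hplus"
proof (rule HplusI)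
  show "(\<lambda>z. z^k *s f z) \<in> L2" using assms by (intro L2_zpow Hplus_L2)
  fix m :: nat assume m: "m \<ge> 1"
  have "(\<integral>z. z^m *s (z^k *s f z) \<partial>circ) = (\<integral>z. z^(m+k) *s f z \<partial>circ)"
    by (simp add: vector_smult_assoc power_add)
  also have "\<dots> = 0" by (rule HplusD[OF assms]) (use m in simp)
  finally show "(\<integral>z. z^m *s (z^k *s f z) \<partial>circ) = 0" .
qed

lemma Hplus_closed:
  assumes fs: "\<And>k. fs k \<in> Hplus" and f: "f \<in> L2"
    and lim: "(\<lambda>k. L2_norm (\<lambda>z. fs k z - f z)) \<longlonglongrightarrow> 0"
  shows "f \<in> Hplus"
proof (rule HplusI[OF f])
  fix m :: nat assume m: "m \<ge> 1"
  define I where "I = (\<integral>z. z^m *s f z \<partial>circ)"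
  have bnd: "norm I \<le> sqrt (2*pi) * L2_norm (\<lambda>z. fs k z - f z)" for k
  proof -
    have fk: "fs k \<in> L2" using fs by (rule Hplus_L2)
    have "I = (\<integral>z. z^m *s f z \<partial>circ) - (\<integral>z. z^m *s fs k z \<partial>circ)"
      using fs m by (simp add: I_def HplusD)
    also have "\<dots> = (\<integral>z. z^m *s f z - z^m *s fs k z \<partial>circ)"
      by (rule Bochner_Integration.integral_diff[symmetric]) (use f fk in \<open>auto intro: int_zpow\<close>)
    also have "\<dots> = (\<integral>z. z^m *s (f z - fs k z) \<partial>circ)"
      by (simp add: vector_ssub_ldistrib)
    finally have "norm I \<le> (\<integral>z. norm (z^m *s (f z - fs k z)) \<partial>circ)"
      by (simp add: integral_norm_bound)
    also have "\<dots> \<le> (\<integral>z. norm (fs k z - f z) \<partial>circ)"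
    proof (rule integral_mono_AE)
      show "integrable circ (\<lambda>z. norm (z^m *s (f z - fs k z)))"
        using f fk by (intro integrable_norm int_zpow L2_diff)
      show "integrable circ (\<lambda>z. norm (fs k z - f z))"
        using f fk by (intro integrable_norm L2_integrable L2_diff)
      show "AE z in circ. norm (z ^ m *s (f z - fs k z)) \<le> norm (fs k z - f z)"
        using AE_circ_pow[of m]
      proof eventually_elim
        case (elim z)
        have "norm (z^m *s (f z - fs k z)) = norm (z^m) * norm (fs k z - f z)"
          by (simp only: norm_smult norm_minus_commute)
        also have "\<dots> \<le> norm (fs k z - f z)" using elim by (intro mult_left_le_one_le) auto
        finally show ?case .
      qed
    qed
    also have "\<dots> \<le> sqrt (2*pi) * L2_norm (\<lambda>z. fs k z - f z)"
      using f fk by (intro L1_le_L2 L2_diff)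
    finally show ?thesis .
  qed
  have "(\<lambda>k. sqrt (2*pi) * L2_norm (\<lambda>z. fs k z - f z)) \<longlonglongrightarrow> sqrt (2*pi) * 0"
    by (intro tendsto_mult tendsto_const lim)
  then have "norm I \<le> sqrt (2*pi) * 0"
    by (rule LIMSEQ_le_const) (use bnd in blast)
  then show "(\<integral>z. z^m *s f z \<partial>circ) = 0" by (simp add: I_def)
qed

lemma Hplus_monom: "(\<lambda>z. (c * z^j) *s v) \<in> Hplus"
proof (rule HplusI)
  show "(\<lambda>z. (c * z^j) *s v) \<in> L2"
    using L2_zpow[of "\<lambda>z. c *s v" j] L2_bounded[of "\<lambda>z. c *s v" "norm (c *s v)"]
    by (simp add: vector_smult_assoc mult.commute)
  fix m :: nat assume m: "m \<ge> 1"
  have "(\<integral>z. z^m *s ((c * z^j) *s v) \<partial>circ) = (\<integral>z. (c * z^(m+j)) *s v \<partial>circ)"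
    by (simp add: vector_smult_assoc power_add mult_ac)
  also have "\<dots> = (\<integral>z. c * z^(m+j) \<partial>circ) *s v"
  proof (rule integral_bounded_linear[OF bounded_linear_smult_left])
    show "integrable circ (\<lambda>z. c * z^(m+j))"
    proof (rule Bochner_Integration.integrable_bound[of circ "\<lambda>z. norm c"])
      show "AE z in circ. norm (c * z ^ (m + j)) \<le> norm (norm c)"
        using AE_circ_pow[of "m+j"] by eventually_elim (auto simp: norm_mult intro!: mult_left_le)
    qed auto
  qed
  also have "(\<integral>z. c * z^(m+j) \<partial>circ) = c * (\<integral>z. z^(m+j) \<partial>circ)"
    by simp
  also have "\<dots> = 0" using m by (simp add: circ_integral_power)
  finally show "(\<integral>z. z^m *s ((c * z^j) *s v) \<partial>circ) = 0" by simp
qed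

lemma sum_smult_left: "(\<Sum>j\<in>A. a j) *s (v::'a::comm_ring_1^'n) = (\<Sum>j\<in>A. a j *s v)"
  by (induction A rule: infinite_finite_induct) (auto simp: vector_sadd_rdistrib)

lemma Hplus_poly: "(\<lambda>z. poly p z *s v) \<in> Hplus"
proof -
  have "(\<lambda>z. poly p z *s v) = (\<lambda>z. \<Sum>j\<le>degree p. (coeff p j * z^j) *s v)"
    by (simp add: poly_altdef sum_smult_left)
  also have "\<dots> \<in> Hplus" by (intro Hplus_sum Hplus_monom)
  finally show ?thesis .
qed

definition TP :: "(complex \<Rightarrow> complex^'n::finite) set" where
  "TP = {t \<in> L2. \<exists>K. (\<lambda>z. z^K *s t z) \<in> Hplus}"

definition Dn :: "(complex \<Rightarrow> complex^'n::finite) set" where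
  "Dn = {g \<in> L2. \<forall>e>0. \<exists>t\<in>TP. L2_norm (\<lambda>z. g z - t z) < e}"

lemma TP_add:
  assumes "t1 \<in> TP" "t2 \<in> TP" shows "(\<lambda>z. t1 z + t2 z) \<in> TP"
proof -
  obtain K1 K2 where K: "(\<lambda>z. z^K1 *s t1 z) \<in> Hplus" "(\<lambda>z. z^K2 *s t2 z) \<in> Hplus"
    using assms by (auto simp: TP_def)
  have "(\<lambda>z. z^K2 *s (z^K1 *s t1 z) + z^K1 *s (z^K2 *s t2 z)) \<in> Hplus"
    by (intro Hplus_add Hplus_mult_zpow K)
  moreover have "(\<lambda>z. z^K2 *s (z^K1 *s t1 z) + z^K1 *s (z^K2 *s t2 z)) = (\<lambda>z. z^(K1+K2) *s (t1 z + t2 z))"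
    by (simp add: vector_smult_assoc vector_add_ldistrib power_add mult.commute)
  ultimately show ?thesis using assms by (auto simp: TP_def intro: L2_add)
qed

lemma TP_smult:
  assumes "t \<in> TP" shows "(\<lambda>z. c *s t z) \<in> TP"
proof -
  obtain K where K: "(\<lambda>z. z^K *s t z) \<in> Hplus" using assms by (auto simp: TP_def)
  have "(\<lambda>z. c *s (z^K *s t z)) \<in> Hplus" by (intro Hplus_smult K)
  moreover have "(\<lambda>z. c *s (z^K *s t z)) = (\<lambda>z. z^K *s (c *s t z))"
    by (simp add: vector_smult_assoc mult.commute)
  ultimately show ?thesis using assms by (auto simp: TP_def intro: L2_smult)
qed

lemma TP_zero: "(\<lambda>z. 0) \<in> TP"
  using Hplus_zero by (auto simp: TP_def L2_zero)

lemma TP_sum: "(\<And>i. i \<in> I \<Longrightarrow> f i \<in> TP) \<Longrightarrow> (\<lambda>z. \<Sum>i\<in>I. f i z) \<in> TP"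
  by (induction I rule: infinite_finite_induct) (auto simp: TP_zero intro!: TP_add)

lemma TP_L2: "t \<in> TP \<Longrightarrow> t \<in> L2" by (simp add: TP_def)

lemma Dn_L2: "g \<in> Dn \<Longrightarrow> g \<in> L2" by (simp add: Dn_def)

lemma TP_Dn: "t \<in> TP \<Longrightarrow> t \<in> Dn"
proof -
  assume t: "t \<in> TP"
  have "L2_norm (\<lambda>z. t z - t z) = 0" by (simp add: L2_norm_def)
  then show ?thesis using t by (auto simp: Dn_def TP_def intro!: bexI[of _ t])
qed

lemma Dn_add:
  assumes "f \<in> Dn" "g \<in> Dn" shows "(\<lambda>z. f z + g z) \<in> Dn"
proof -
  have f: "f \<in> L2" and g: "g \<in> L2" using assms by (auto simp: Dn_def)
  have "\<exists>t\<in>TP. L2_norm (\<lambda>z. (f z + g z) - t z) < e" if e: "e > 0" for e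
  proof -
    obtain t1 where t1: "t1 \<in> TP" "L2_norm (\<lambda>z. f z - t1 z) < e/2"
      using assms(1) e by (auto simp: Dn_def dest!: spec[of _ "e/2"])
    obtain t2 where t2: "t2 \<in> TP" "L2_norm (\<lambda>z. g z - t2 z) < e/2"
      using assms(2) e by (auto simp: Dn_def dest!: spec[of _ "e/2"])
    have "L2_norm (\<lambda>z. (f z + g z) - (t1 z + t2 z)) = L2_norm (\<lambda>z. (f z - t1 z) + (g z - t2 z))"
      by (simp add: algebra_simps)
    also have "\<dots> \<le> L2_norm (\<lambda>z. f z - t1 z) + L2_norm (\<lambda>z. g z - t2 z)"
      using f g t1 t2 by (intro L2_norm_triangle L2_diff) (auto intro: TP_L2)
    finally show ?thesis using t1 t2 by (intro bexI[of _ "\<lambda>z. t1 z + t2 z"] TP_add) auto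
  qed
  then show ?thesis using f g by (auto simp: Dn_def intro: L2_add)
qed

lemma Dn_smult:
  assumes "f \<in> Dn" shows "(\<lambda>z. c *s f z) \<in> Dn"
proof -
  have f: "f \<in> L2" using assms by (auto simp: Dn_def)
  have "\<exists>t\<in>TP. L2_norm (\<lambda>z. c *s f z - t z) < e" if e: "e > 0" for e
  proof -
    have nc: "norm c + 1 > 0" by (simp add: add_nonneg_pos)
    then have ec: "e / (norm c + 1) > 0" using e by simp
    obtain t where t: "t \<in> TP" "L2_norm (\<lambda>z. f z - t z) < e / (norm c + 1)"
      using assms ec by (auto simp: Dn_def dest!: spec[of _ "e / (norm c + 1)"])
    have "L2_norm (\<lambda>z. c *s f z - c *s t z) = norm c * L2_norm (\<lambda>z. f z - t z)"
      using L2_norm_smult[of c "\<lambda>z. f z - t z"] by (simp add: vector_ssub_ldistrib)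
    also have "\<dots> \<le> (norm c + 1) * L2_norm (\<lambda>z. f z - t z)"
      by (intro mult_right_mono L2_norm_nonneg) auto
    also have "\<dots> < (norm c + 1) * (e / (norm c + 1))"
      using t nc by (intro mult_strict_left_mono) auto
    also have "\<dots> = e" using nc by simp
    finally show ?thesis using t by (intro bexI[of _ "\<lambda>z. c *s t z"] TP_smult) auto
  qed
  then show ?thesis using f by (auto simp: Dn_def intro: L2_smult)
qed

lemma Dn_zero: "(\<lambda>z. 0) \<in> Dn" by (intro TP_Dn TP_zero)

lemma Dn_diff: "f \<in> Dn \<Longrightarrow> g \<in> Dn \<Longrightarrow> (\<lambda>z. f z - g z) \<in> Dn"
  using Dn_add[of f "\<lambda>z. (-1) *s g z"] Dn_smult[of g "-1"]
  by (simp add: vector_sneg_minus1[symmetric])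

lemma Dn_sum: "(\<And>i. i \<in> I \<Longrightarrow> f i \<in> Dn) \<Longrightarrow> (\<lambda>z. \<Sum>i\<in>I. f i z) \<in> Dn"
  by (induction I rule: infinite_finite_induct) (auto simp: Dn_zero intro!: Dn_add)

lemma Dn_closed:
  assumes fs: "\<And>k. fs k \<in> Dn" and f: "f \<in> L2"
    and lim: "(\<lambda>k. L2_norm (\<lambda>z. fs k z - f z)) \<longlonglongrightarrow> 0"
  shows "f \<in> Dn"
proof -
  have "\<exists>t\<in>TP. L2_norm (\<lambda>z. f z - t z) < e" if e: "e > 0" for e
  proof -
    obtain k where "\<forall>n\<ge>k. norm (L2_norm (\<lambda>z. fs n z - f z) - 0) < e/2"
      using LIMSEQ_D[OF lim, of "e/2"] e by auto
    then have k: "L2_norm (\<lambda>z. fs k z - f z) < e/2"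
      using L2_norm_nonneg[of "\<lambda>z. fs k z - f z"] by auto
    obtain t where t: "t \<in> TP" "L2_norm (\<lambda>z. fs k z - t z) < e/2"
      using fs[of k] e by (auto simp: Dn_def dest!: spec[of _ "e/2"])
    have "L2_norm (\<lambda>z. f z - t z) \<le> L2_norm (\<lambda>z. f z - fs k z) + L2_norm (\<lambda>z. fs k z - t z)"
      using f fs[of k] t by (intro L2_norm_triangle3) (auto intro: Dn_L2 TP_L2)
    also have "L2_norm (\<lambda>z. f z - fs k z) = L2_norm (\<lambda>z. fs k z - f z)"
      by (rule L2_norm_commute)
    finally show ?thesis using k t by (intro bexI[of _ t]) auto
  qed
  then show ?thesis using f by (auto simp: Dn_def)
qed

lemma Dn_cong:
  assumes "f \<in> Dn" "g \<in> L2" "AE z in circ. f z = g z"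
  shows "g \<in> Dn"
proof (rule Dn_closed[of "\<lambda>k. f"])
  have fg: "(\<lambda>z. f z - g z) \<in> L2" using assms by (auto intro: L2_diff Dn_L2)
  have "L2_norm (\<lambda>z. f z - g z) = 0"
    using L2_norm_zero_iff[OF fg] assms(3) by auto
  then show "(\<lambda>k. L2_norm (\<lambda>z. f z - g z)) \<longlonglongrightarrow> 0" by simp
qed (use assms in auto)

lemma lin_circle_identity:
  fixes z :: complex and a b :: real
  assumes "norm z = 1"
  shows "z * complex_of_real (Re z * a + Im z * b) =
         poly [:(of_real a + \<i> * of_real b)/2, 0, (of_real a - \<i> * of_real b)/2:] z"
proof -
  have h: "Re z * Re z + Im z * Im z = 1"
    using assms by (simp add: cmod_def power2_eq_square)
  have h1: "Re z * Re z = 1 - Im z * Im z" using h by simp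
  show ?thesis
    using h by (simp add: complex_eq_iff power2_eq_square algebra_simps field_simps) algebra
qed

lemma rpf_trig:
  fixes q :: "complex \<Rightarrow> real"
  assumes "real_polynomial_function q"
  shows "\<exists>K p. \<forall>z. norm z = 1 \<longrightarrow> z^K * complex_of_real (q z) = poly p z"
  using assms
proof (induction q rule: real_polynomial_function.induct)
  case (linear f)
  have fz: "f z = Re z * f 1 + Im z * f \<i>" for z
  proof -
    have "z = Re z *\<^sub>R 1 + Im z *\<^sub>R \<i>" by (simp add: complex_eq_iff)
    then have "f z = f (Re z *\<^sub>R 1 + Im z *\<^sub>R \<i>)" by simp
    also have "\<dots> = Re z * f 1 + Im z * f \<i>"
      using linear by (simp add: linear_simps)
    finally show ?thesis .
  qed
  show ?case
  proof (intro exI allI impI)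
    fix z :: complex assume z: "norm z = 1"
    show "z^1 * complex_of_real (f z) = poly [:(of_real (f 1) + \<i> * of_real (f \<i>))/2, 0, (of_real (f 1) - \<i> * of_real (f \<i>))/2:] z"
      using lin_circle_identity[OF z, of "f 1" "f \<i>"] by (simp only: fz[of z] power_one_right)
  qed
next
  case (const c)
  show ?case by (rule exI[of _ 0], rule exI[of _ "[:of_real c:]"]) simp
next
  case (add f g)
  then obtain K1 p1 K2 p2 where 1: "\<forall>z. norm z = 1 \<longrightarrow> z^K1 * complex_of_real (f z) = poly p1 z"
    and 2: "\<forall>z. norm z = 1 \<longrightarrow> z^K2 * complex_of_real (g z) = poly p2 z" by blast
  show ?case
  proof (intro exI allI impI)
    fix z :: complex assume z: "norm z = 1"
    have "z^(K1+K2) * complex_of_real (f z + g z) = z^K2 * (z^K1 * complex_of_real (f z)) + z^K1 * (z^K2 * complex_of_real (g z))"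
      by (simp add: power_add algebra_simps)
    also have "\<dots> = poly (monom 1 K2 * p1 + monom 1 K1 * p2) z"
      using 1 2 z by (simp add: poly_monom)
    finally show "z^(K1+K2) * complex_of_real (f z + g z) = poly (monom 1 K2 * p1 + monom 1 K1 * p2) z" .
  qed
next
  case (mult f g)
  then obtain K1 p1 K2 p2 where 1: "\<forall>z. norm z = 1 \<longrightarrow> z^K1 * complex_of_real (f z) = poly p1 z"
    and 2: "\<forall>z. norm z = 1 \<longrightarrow> z^K2 * complex_of_real (g z) = poly p2 z" by blast
  show ?case
  proof (intro exI allI impI)
    fix z :: complex assume z: "norm z = 1"
    have "z^(K1+K2) * complex_of_real (f z * g z) = (z^K1 * complex_of_real (f z)) * (z^K2 * complex_of_real (g z))"
      by (simp add: power_add algebra_simps)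
    also have "\<dots> = poly (p1 * p2) z"
      using 1 2 z by simp
    finally show "z^(K1+K2) * complex_of_real (f z * g z) = poly (p1 * p2) z" .
  qed
qed

lemma L2_norm_bound:
  fixes h :: "complex \<Rightarrow> complex^'n::finite"
  assumes [measurable]: "h \<in> borel_measurable borel" and B: "AE z in circ. norm (h z) \<le> B" "B \<ge> 0"
  shows "L2_norm h \<le> sqrt (2*pi) * B"
proof -
  have hL: "h \<in> L2" by (rule L2_bounded) (use B in auto)
  have "(\<integral>z. (norm (h z))^2 \<partial>circ) \<le> (\<integral>z. B^2 \<partial>circ)"
  proof (rule integral_mono_AE)
    show "integrable circ (\<lambda>z. (norm (h z))^2)" using hL by (simp add: L2_def)
    show "AE z in circ. (norm (h z))^2 \<le> B^2" using B(1) by eventually_elim (auto intro: power_mono)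
  qed auto
  also have "\<dots> = 2*pi*B^2" by (simp add: measure_circ_UNIV)
  finally have "L2_norm h \<le> sqrt (2*pi*B^2)" by (simp add: L2_norm_def)
  also have "\<dots> = sqrt (2*pi) * B" using B(2) by (simp add: real_sqrt_mult)
  finally show ?thesis .
qed

lemma bounded_on_circle:
  fixes q :: "complex \<Rightarrow> 'a::real_normed_vector"
  assumes "continuous_on UNIV q"
  obtains B where "B \<ge> 0" "\<And>z. norm z = 1 \<Longrightarrow> norm (q z) \<le> B"
proof -
  have "compact (q ` sphere 0 1)"
    by (intro compact_continuous_image continuous_on_subset[OF assms]) auto
  then obtain B where "B > 0" "\<And>y. y \<in> q ` sphere 0 1 \<Longrightarrow> norm y \<le> B"
    using compact_imp_bounded bounded_pos by metis
  then show ?thesis using that[of B] by auto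
qed

lemma cont_L2:
  fixes q :: "complex \<Rightarrow> complex^'n::finite"
  assumes "continuous_on UNIV q"
  shows "q \<in> L2"
proof -
  obtain B where B: "B \<ge> 0" "\<And>z. norm z = 1 \<Longrightarrow> norm (q z) \<le> B"
    using bounded_on_circle[OF assms] by blast
  show ?thesis
  proof (rule L2_bounded)
    show "q \<in> borel_measurable borel" using assms by (rule borel_measurable_continuous_onI)
    show "AE z in circ. norm (q z) \<le> B" using AE_circ_norm by eventually_elim (use B in auto)
  qed
qed

lemma rpf_TP:
  fixes q :: "complex \<Rightarrow> real" and v :: "complex^'n::finite"
  assumes q: "real_polynomial_function q"
  shows "(\<lambda>z. complex_of_real (q z) *s v) \<in> TP"
proof -
  have cq: "continuous_on UNIV q"
    using q by (intro continuous_on_polymonial_function) (simp add: real_polynomial_function_eq)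
  have cont: "continuous_on UNIV (\<lambda>z. complex_of_real (q z) *s v)"
    unfolding vector_scalar_mult_def by (intro continuous_on_vec_lambda continuous_intros cq)
  have [measurable]: "q \<in> borel_measurable borel" using cq by (rule borel_measurable_continuous_onI)
  obtain K p where Kp: "\<And>z. norm z = 1 \<Longrightarrow> z^K * complex_of_real (q z) = poly p z"
    using rpf_trig[OF q] by blast
  have "(\<lambda>z. z^K *s (complex_of_real (q z) *s v)) \<in> Hplus"
  proof (rule Hplus_cong[OF Hplus_poly[of p v]])
    show "(\<lambda>z. z^K *s (complex_of_real (q z) *s v)) \<in> borel_measurable borel" by measurable
    show "AE z in circ. poly p z *s v = z^K *s (complex_of_real (q z) *s v)"
      using AE_circ_norm by eventually_elim (simp add: Kp[symmetric] vector_smult_assoc)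
  qed
  then show ?thesis using cont_L2[OF cont] by (auto simp: TP_def)
qed

lemma vec_decomp:
  fixes x :: "complex^'n::finite"
  shows "x = (\<Sum>i\<in>UNIV. complex_of_real (Re (x $ i)) *s axis i 1 + complex_of_real (Im (x $ i)) *s axis i \<i>)"
proof -
  have "(\<Sum>i\<in>UNIV. complex_of_real (Re (x $ i)) *s axis i 1 + complex_of_real (Im (x $ i)) *s axis i \<i>) $ j = x $ j" for j
  proof -
    have "(\<Sum>i\<in>UNIV. complex_of_real (Re (x $ i)) *s axis i 1 + complex_of_real (Im (x $ i)) *s axis i \<i>) $ j
        = (\<Sum>i\<in>UNIV. if i = j then complex_of_real (Re (x $ i)) + complex_of_real (Im (x $ i)) * \<i> else 0)"
      by (simp add: sum_component axis_def vector_scalar_mult_def if_distrib cong: if_cong)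
    also have "\<dots> = x $ j" by (simp add: complex_eq_iff)
    finally show ?thesis .
  qed
  then show ?thesis by (simp add: vec_eq_iff)
qed

lemma polyfun_TP:
  fixes g :: "complex \<Rightarrow> complex^'n::finite"
  assumes g: "polynomial_function g"
  shows "g \<in> TP"
proof -
  have re: "real_polynomial_function (\<lambda>z. Re (g z $ i))" for i
  proof -
    have "bounded_linear (\<lambda>x::complex^'n. Re (x $ i))"
      by (rule bounded_linear_compose[OF bounded_linear_Re bounded_linear_vec_nth])
    then show ?thesis using g unfolding polynomial_function_def by (auto simp: o_def)
  qed
  have im: "real_polynomial_function (\<lambda>z. Im (g z $ i))" for i
  proof -
    have "bounded_linear (\<lambda>x::complex^'n. Im (x $ i))"
      by (rule bounded_linear_compose[OF bounded_linear_Im bounded_linear_vec_nth])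
    then show ?thesis using g unfolding polynomial_function_def by (auto simp: o_def)
  qed
  have "(\<lambda>z. \<Sum>i\<in>UNIV. complex_of_real (Re (g z $ i)) *s axis i 1 + complex_of_real (Im (g z $ i)) *s axis i \<i>) \<in> TP"
    by (intro TP_sum TP_add rpf_TP re im)
  then show ?thesis by (simp flip: vec_decomp)
qed

lemma cont_Dn:
  fixes q :: "complex \<Rightarrow> complex^'n::finite"
  assumes cq: "continuous_on UNIV q"
  shows "q \<in> Dn"
proof -
  have qL: "q \<in> L2" by (rule cont_L2[OF cq])
  have [measurable]: "q \<in> borel_measurable borel" using cq by (rule borel_measurable_continuous_onI)
  have "\<exists>t\<in>TP. L2_norm (\<lambda>z. q z - t z) < e" if e: "e > 0" for e
  proof -
    obtain g where g: "polynomial_function g" "\<And>z. z \<in> sphere 0 1 \<Longrightarrow> norm (q z - g z) < e/7"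
      using Stone_Weierstrass_polynomial_function[of "sphere 0 1" q "e/7"] e
        continuous_on_subset[OF cq] by auto
    have [measurable]: "g \<in> borel_measurable borel"
      using g(1) by (intro borel_measurable_continuous_onI continuous_on_polymonial_function)
    have "L2_norm (\<lambda>z. q z - g z) \<le> sqrt (2*pi) * (e/7)"
    proof (rule L2_norm_bound)
      show "AE z in circ. norm (q z - g z) \<le> e/7"
        using AE_circ_norm by eventually_elim (use g(2) in \<open>auto intro: less_imp_le\<close>)
    qed (use e in auto)
    also have "\<dots> < e"
    proof -
      have "2*pi < 3^2" using pi_less_4 by simp
      then have "sqrt (2*pi) < 3" by (metis real_sqrt_less_iff real_sqrt_abs abs_numeral)
      then show ?thesis using e by (simp add: field_simps)
    qed
    finally show ?thesis using polyfun_TP[OF g(1)] by blast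
  qed
  then show ?thesis using qL by (simp add: Dn_def)
qed

lemma ind_L2:
  assumes "A \<in> sets borel"
  shows "(\<lambda>z. (indicator A z :: complex) *s v) \<in> L2"
proof (rule L2_bounded[where B="norm v"])
  show "(\<lambda>z. (indicator A z :: complex) *s v) \<in> borel_measurable borel"
    using assms by measurable
  show "AE z in circ. norm ((indicator A z :: complex) *s v) \<le> norm v"
    by (rule AE_I2) (auto simp: norm_smult indicator_def)
qed

lemma Dn_limit:
  fixes fs :: "nat \<Rightarrow> complex \<Rightarrow> complex^'n::finite"
  assumes fs: "\<And>k. fs k \<in> Dn" and f: "f \<in> L2"
    and lim: "\<And>z. (\<lambda>k. fs k z) \<longlonglongrightarrow> f z"
    and bnd: "\<And>k z. norm (fs k z - f z) \<le> B"
  shows "f \<in> Dn"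
proof (rule Dn_closed[OF fs f])
  have "(\<lambda>k. gN circ (\<lambda>z. fs k z - f z)) \<longlonglongrightarrow> 0"
  proof (rule gN_dominated[where w="\<lambda>z. B^2"])
    show "sqint circ (fs k)" for k using fs[of k] by (simp add: Dn_L2 flip: L2_sqint)
    show "sqint circ f" using f by (simp add: L2_sqint)
    show "integrable circ (\<lambda>z. B^2)" by simp
    show "AE x in circ. (\<lambda>i. fs i x) \<longlonglongrightarrow> f x" using lim by simp
    show "AE x in circ. (norm (fs i x - f x))^2 \<le> B^2" for i
      by (rule AE_I2) (auto intro: power_mono bnd)
  qed
  then show "(\<lambda>k. L2_norm (\<lambda>z. fs k z - f z)) \<longlonglongrightarrow> 0" by (simp add: L2_norm_gN)
qed

lemma open_Dn:
  fixes v :: "complex^'n::finite"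
  assumes U: "open U"
  shows "(\<lambda>z. (indicator U z :: complex) *s v) \<in> Dn"
proof (cases "U = UNIV")
  case True
  then show ?thesis using cont_Dn[of "\<lambda>z. v"] by simp
next
  case False
  define C where "C = - U"
  have C: "closed C" "C \<noteq> {}" using U False by (auto simp: C_def)
  define fs where "fs k z = complex_of_real (min 1 (real k * infdist z C)) *s v" for k z
  show ?thesis
  proof (rule Dn_limit[where fs=fs and B="2 * norm v"])
    show "fs k \<in> Dn" for k
      unfolding fs_def vector_scalar_mult_def
      by (intro cont_Dn continuous_on_vec_lambda continuous_intros)
    show "(\<lambda>z. (indicator U z :: complex) *s v) \<in> L2"
      using U by (intro ind_L2) auto
    show "(\<lambda>k. fs k z) \<longlonglongrightarrow> (indicator U z :: complex) *s v" for z
    proof (cases "z \<in> U")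
      case True
      then have d: "infdist z C > 0" using C by (intro infdist_pos_not_in_closed) (auto simp: C_def)
      obtain N :: nat where N: "1 / infdist z C < real N" using reals_Archimedean2 by blast
      have "\<forall>k\<ge>N. fs k z = (indicator U z :: complex) *s v"
      proof (intro allI impI)
        fix k assume "k \<ge> N"
        then have "1 / infdist z C < real k" using N by linarith
        then have "1 \<le> real k * infdist z C" using d by (simp add: field_simps)
        then show "fs k z = (indicator U z :: complex) *s v" using True by (simp add: fs_def)
      qed
      then show ?thesis by (intro tendsto_eventually) (auto simp: eventually_sequentially)
    next
      case False
      then have "z \<in> C" by (simp add: C_def)
      then show ?thesis using False by (simp add: fs_def)
    qed
    show "norm (fs k z - (indicator U z :: complex) *s v) \<le> 2 * norm v" for k z
    proof -
      have "norm (fs k z) \<le> norm v"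
        unfolding fs_def norm_smult using infdist_nonneg[of z C]
        by (intro mult_left_le_one_le) auto
      moreover have "norm ((indicator U z :: complex) *s v) \<le> norm v"
        by (auto simp: norm_smult indicator_def)
      ultimately show ?thesis using norm_triangle_ineq4[of "fs k z" "(indicator U z :: complex) *s v"]
        by linarith
    qed
  qed
qed

lemma disj_ind_sum:
  fixes A :: "nat \<Rightarrow> 'a set"
  assumes "disjoint_family A"
  shows "(\<Sum>i<k. (indicator (A i) z :: complex)) = (if \<exists>j<k. z \<in> A j then 1 else 0)"
proof (cases "\<exists>j. z \<in> A j")
  case True
  then obtain j where j: "z \<in> A j" by blast
  have "i \<noteq> j \<Longrightarrow> z \<notin> A i" for i using assms j by (auto simp: disjoint_family_on_def)
  then have ind: "(indicator (A i) z :: complex) = (if i = j then 1 else 0)" for i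
    using j by (auto simp: indicator_def)
  have "(\<Sum>i<k. (indicator (A i) z :: complex)) = (\<Sum>i<k. (if i = j then 1 else 0 :: complex))"
    by (simp only: ind)
  also have "\<dots> = (if j < k then 1 else 0)"
    by (induction k) auto
  finally have "(\<Sum>i<k. (indicator (A i) z :: complex)) = (if j < k then 1 else 0)" .
  moreover have "(\<exists>j'<k. z \<in> A j') \<longleftrightarrow> j < k"
    using \<open>\<And>i. i \<noteq> j \<Longrightarrow> z \<notin> A i\<close> j by metis
  ultimately show ?thesis by simp
next
  case False
  then show ?thesis by (simp add: indicator_def)
qed

lemma borel_Dn:
  fixes v :: "complex^'n::finite"
  assumes A: "A \<in> sets borel"
  shows "(\<lambda>z. (indicator A z :: complex) *s v) \<in> Dn"
proof -
  have Asig: "A \<in> sigma_sets UNIV {S. open S}" using A by (simp add: sets_borel)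
  have IS: "Int_stable {S::complex set. open S}" by (auto simp: Int_stable_def)
  have PW: "{S::complex set. open S} \<subseteq> Pow UNIV" by auto
  have "\<forall>v::complex^'n. (\<lambda>z. (indicator A z :: complex) *s v) \<in> Dn"
    using IS PW Asig
  proof (induction rule: sigma_sets_induct_disjoint)
    case (basic A)
    then show ?case by (auto intro: open_Dn)
  next
    case empty
    show ?case using Dn_zero by simp
  next
    case (compl A)
    show ?case
    proof
      fix v :: "complex^'n"
      have "(\<lambda>z. v - (indicator A z :: complex) *s v) \<in> Dn"
        using compl cont_Dn[of "\<lambda>z. v"] by (intro Dn_diff) auto
      moreover have "(\<lambda>z. v - (indicator A z :: complex) *s v) = (\<lambda>z. (indicator (UNIV - A) z :: complex) *s v)"
        by (auto simp: indicator_def)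
      ultimately show "(\<lambda>z. (indicator (UNIV - A) z :: complex) *s v) \<in> Dn" by simp
    qed
  next
    case (union A)
    show ?case
    proof
      fix v :: "complex^'n"
      have Asets: "A i \<in> sets borel" for i using union(2) by (auto simp: sets_borel)
      have Usets: "(\<Union>i. A i) \<in> sets borel" using Asets by auto
      show "(\<lambda>z. (indicator (\<Union>i. A i) z :: complex) *s v) \<in> Dn"
      proof (rule Dn_limit[where fs="\<lambda>k z. \<Sum>i<k. (indicator (A i) z :: complex) *s v" and B="2 * norm v"])
        show "(\<lambda>z. \<Sum>i<k. (indicator (A i) z :: complex) *s v) \<in> Dn" for k
          using union(3) by (intro Dn_sum) auto
        show "(\<lambda>z. (indicator (\<Union>i. A i) z :: complex) *s v) \<in> L2"
          by (rule ind_L2[OF Usets])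
        have eq: "(\<Sum>i<k. (indicator (A i) z :: complex) *s v) = (if \<exists>j<k. z \<in> A j then v else 0)" for k z
        proof -
          have "(\<Sum>i<k. (indicator (A i) z :: complex) *s v) = (\<Sum>i<k. (indicator (A i) z :: complex)) *s v"
            by (simp add: sum_smult_left)
          also have "\<dots> = (if \<exists>j<k. z \<in> A j then 1 else 0) *s v"
            by (simp only: disj_ind_sum[OF union(1), where k=k and z=z])
          also have "\<dots> = (if \<exists>j<k. z \<in> A j then v else 0)" by auto
          finally show ?thesis .
        qed
        show "(\<lambda>k. \<Sum>i<k. (indicator (A i) z :: complex) *s v) \<longlonglongrightarrow> (indicator (\<Union>i. A i) z :: complex) *s v" for z
        proof (cases "\<exists>j. z \<in> A j")
          case True
          then obtain j where j: "z \<in> A j" by blast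
          have "\<forall>k\<ge>Suc j. (\<Sum>i<k. (indicator (A i) z :: complex) *s v) = (indicator (\<Union>i. A i) z :: complex) *s v"
          proof (intro allI impI)
            fix k assume "k \<ge> Suc j"
            then have ex: "\<exists>j'<k. z \<in> A j'" using j Suc_le_lessD by blast
            have ind: "(indicator (\<Union>i. A i) z :: complex) = 1" using j by (auto simp: indicator_def)
            show "(\<Sum>i<k. (indicator (A i) z :: complex) *s v) = (indicator (\<Union>i. A i) z :: complex) *s v"
              unfolding eq[where k=k and z=z] ind using ex by simp
          qed
          then show ?thesis by (intro tendsto_eventually) (auto simp: eventually_sequentially)
        next
          case False
          then show ?thesis by (simp add: eq indicator_def)
        qed
        show "norm ((\<Sum>i<k. (indicator (A i) z :: complex) *s v) - (indicator (\<Union>i. A i) z :: complex) *s v) \<le> 2 * norm v" for k z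
        proof -
          have "norm (\<Sum>i<k. (indicator (A i) z :: complex) *s v) \<le> norm v" by (simp add: eq)
          moreover have "norm ((indicator (\<Union>i. A i) z :: complex) *s v) \<le> norm v"
            by (auto simp: norm_smult indicator_def)
          ultimately show ?thesis
            using norm_triangle_ineq4[of "\<Sum>i<k. (indicator (A i) z :: complex) *s v" "(indicator (\<Union>i. A i) z :: complex) *s v"]
            by linarith
        qed
      qed
    qed
  qed
  then show ?thesis by blast
qed

lemma simple_Dn:
  fixes s :: "complex \<Rightarrow> complex^'n::finite"
  assumes s: "simple_function circ s"
  shows "s \<in> Dn"
proof -
  have fin: "finite (s ` UNIV)" using s by (simp add: simple_function_def)
  have pre: "s -` {y} \<in> sets borel" for y
  proof (cases "y \<in> s ` UNIV")
    case True
    then show ?thesis using s by (auto simp: simple_function_def)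
  next
    case False
    then have "s -` {y} = {}" by auto
    then show ?thesis by simp
  qed
  have eq: "s z = (\<Sum>y\<in>s ` UNIV. (indicator (s -` {y}) z :: complex) *s y)" for z
  proof -
    have "(\<Sum>y\<in>s ` UNIV. (indicator (s -` {y}) z :: complex) *s y) = (\<Sum>y\<in>s ` UNIV. if s z = y then y else 0)"
      by (intro sum.cong) (auto simp: indicator_def)
    also have "\<dots> = s z" using fin by simp
    finally show ?thesis by simp
  qed
  have "(\<lambda>z. \<Sum>y\<in>s ` UNIV. (indicator (s -` {y}) z :: complex) *s y) \<in> Dn"
    by (intro Dn_sum borel_Dn pre)
  then show ?thesis by (simp flip: eq)
qed

lemma L2_Dn:
  fixes f :: "complex \<Rightarrow> complex^'n::finite"
  assumes f: "f \<in> L2"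
  shows "f \<in> Dn"
proof -
  have [measurable]: "f \<in> borel_measurable circ" using f by (simp add: L2_def)
  obtain F where F: "\<And>i. simple_function circ (F i)" "\<And>x. (\<lambda>i. F i x) \<longlonglongrightarrow> f x"
    "\<And>i x. dist (F i x) 0 \<le> 2 * dist (f x) 0"
    using borel_measurable_implies_sequence_metric[of f circ 0] by auto
  show ?thesis
  proof (rule Dn_closed[of F])
    show "F i \<in> Dn" for i by (rule simple_Dn[OF F(1)])
    show "f \<in> L2" by (rule f)
    have "(\<lambda>i. gN circ (\<lambda>x. F i x - f x)) \<longlonglongrightarrow> 0"
    proof (rule gN_dominated[where w="\<lambda>x. 9 * (norm (f x))^2"])
      show "sqint circ (F i)" for i using simple_Dn[OF F(1)] by (simp add: Dn_L2 flip: L2_sqint)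
      show "sqint circ f" using f by (simp add: L2_sqint)
      show "integrable circ (\<lambda>x. 9 * (norm (f x))^2)" using f by (simp add: L2_def)
      show "AE x in circ. (\<lambda>i. F i x) \<longlonglongrightarrow> f x" using F(2) by simp
      show "AE x in circ. (norm (F i x - f x))^2 \<le> 9 * (norm (f x))^2" for i
      proof (rule AE_I2)
        fix x
        have "norm (F i x - f x) \<le> norm (F i x) + norm (f x)" by (rule norm_triangle_ineq4)
        also have "\<dots> \<le> 3 * norm (f x)" using F(3)[of i x] by simp
        finally have "(norm (F i x - f x))^2 \<le> (3 * norm (f x))^2" by (intro power_mono) auto
        then show "(norm (F i x - f x))^2 \<le> 9 * (norm (f x))^2" by (simp add: power_mult_distrib)
      qed
    qed
    then show "(\<lambda>i. L2_norm (\<lambda>z. F i z - f z)) \<longlonglongrightarrow> 0" by (simp add: L2_norm_gN)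
  qed
qed

lemma L2_complete:
  fixes f :: "nat \<Rightarrow> complex \<Rightarrow> complex^'n::finite"
  assumes f: "\<And>i. f i \<in> L2"
    and cauchy: "\<And>e. e > 0 \<Longrightarrow> \<exists>K. \<forall>m\<ge>K. \<forall>n\<ge>K. L2_norm (\<lambda>x. f m x - f n x) < e"
  shows "\<exists>g\<in>L2. (\<lambda>i. L2_norm (\<lambda>x. f i x - g x)) \<longlonglongrightarrow> 0"
  using sqint_complete[of circ f] f cauchy by (auto simp: L2_sqint L2_norm_gN)

lemma L2_norm_zero_fun: "L2_norm (\<lambda>z. 0) = 0"
  by (simp add: L2_norm_def)

definition Eset :: "(complex \<Rightarrow> complex^'n::finite) set \<Rightarrow> nat \<Rightarrow> (complex \<Rightarrow> complex^'n) set" where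
  "Eset P n = {g \<in> L2. \<exists>p\<in>P. \<exists>h\<in>Hplus. (AE z in circ. g z = p z + h z) \<and> L2_norm h \<le> real n}"

lemma L2_norm_diff_le:
  assumes "f \<in> L2" "g \<in> L2"
  shows "L2_norm (\<lambda>z. f z - g z) \<le> L2_norm f + L2_norm g"
proof -
  have "L2_norm (\<lambda>z. f z - g z) = L2_norm (\<lambda>z. f z + (-1) *s g z)"
    by (simp add: vector_sneg_minus1[symmetric])
  also have "\<dots> \<le> L2_norm f + L2_norm (\<lambda>z. (-1) *s g z)"
    using assms by (intro L2_norm_triangle L2_smult)
  also have "L2_norm (\<lambda>z. (-1) *s g z) = L2_norm g" using L2_norm_smult[of "-1" g] by simp
  finally show ?thesis .
qed

lemma geo_tail: "n \<le> m \<Longrightarrow> (\<Sum>k\<in>{n..<m}. (1/2::real)^k) = 2*(1/2)^n - 2*(1/2)^m"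
  by (induction m rule: dec_induct) auto

lemma geo_tail_le: "(\<Sum>k\<in>{n..<m}. (1/2::real)^k) \<le> 2*(1/2)^n"
proof (cases "n \<le> m")
  case True
  then show ?thesis using geo_tail[OF True] by simp
next
  case False
  then show ?thesis by simp
qed

lemma L2_norm_sum_le:
  "(\<And>i. i \<in> I \<Longrightarrow> f i \<in> L2) \<Longrightarrow> L2_norm (\<lambda>z. \<Sum>i\<in>I. f i z) \<le> (\<Sum>i\<in>I. L2_norm (f i))"
  unfolding L2_norm_gN by (rule gN_sum_le) (simp add: L2_sqint[symmetric])

lemma sum_diff_ivl: fixes m n :: nat shows "n \<le> m \<Longrightarrow> (\<Sum>k<m. a k) - (\<Sum>k<n. a k) = (\<Sum>k\<in>{n..<m}. (a k :: 'a::ab_group_add))"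
  by (induction m rule: dec_induct) (auto simp: algebra_simps)

context
  fixes P :: "(complex \<Rightarrow> complex^'n::finite) set"
  assumes closedP: "closed_L2_subspace P"
    and sumP: "\<forall>f\<in>L2. \<exists>p\<in>P. \<exists>h\<in>Hplus. AE z in circ. f z = p z + h z"
    and directP: "\<forall>f\<in>P \<inter> Hplus. AE z in circ. f z = 0"
begin

lemma P_L2: "p \<in> P \<Longrightarrow> p \<in> L2"
  using closedP by (auto simp: closed_L2_subspace_def)

lemma P_zero: "(\<lambda>z. 0) \<in> P"
  using closedP by (auto simp: closed_L2_subspace_def)

lemma P_add: "p \<in> P \<Longrightarrow> q \<in> P \<Longrightarrow> (\<lambda>z. p z + q z) \<in> P"
  using closedP by (auto simp: closed_L2_subspace_def)

lemma P_smult: "p \<in> P \<Longrightarrow> (\<lambda>z. c *s p z) \<in> P"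
  using closedP by (auto simp: closed_L2_subspace_def)

lemma P_closed: "(\<And>k. fs k \<in> P) \<Longrightarrow> f \<in> L2 \<Longrightarrow> (\<lambda>k. L2_norm (\<lambda>z. fs k z - f z)) \<longlonglongrightarrow> 0 \<Longrightarrow> f \<in> P"
  using closedP unfolding closed_L2_subspace_def by blast

lemma P_diff: "p \<in> P \<Longrightarrow> q \<in> P \<Longrightarrow> (\<lambda>z. p z - q z) \<in> P"
  using P_add[of p "\<lambda>z. (-1) *s q z"] P_smult[of q "-1"]
  by (simp add: vector_sneg_minus1[symmetric])

lemma P_sum: "(\<And>i. i \<in> I \<Longrightarrow> f i \<in> P) \<Longrightarrow> (\<lambda>z. \<Sum>i\<in>I. f i z) \<in> P"
  by (induction I rule: infinite_finite_induct) (auto simp: P_zero intro!: P_add)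

lemma P_cong:
  assumes "p \<in> P" "q \<in> L2" "AE z in circ. p z = q z"
  shows "q \<in> P"
proof (rule P_closed[of "\<lambda>k. p"])
  have pq: "(\<lambda>z. p z - q z) \<in> L2" using assms by (auto intro: L2_diff P_L2)
  have "L2_norm (\<lambda>z. p z - q z) = 0"
    using L2_norm_zero_iff[OF pq] assms(3) by auto
  then show "(\<lambda>k. L2_norm (\<lambda>z. p z - q z)) \<longlonglongrightarrow> 0" by simp
qed (use assms in auto)

lemma unique_decomp:
  assumes "p \<in> P" "h \<in> Hplus"
    and "p' \<in> P" "h' \<in> Hplus" "AE z in circ. p z + h z = p' z + h' z"
  shows "L2_norm h = L2_norm h'"
proof -
  have hh: "(\<lambda>z. h z - h' z) \<in> Hplus" using assms by (intro Hplus_diff)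
  have pp: "(\<lambda>z. p' z - p z) \<in> P" using assms by (intro P_diff)
  have "(\<lambda>z. h z - h' z) \<in> P"
  proof (rule P_cong[OF pp])
    show "(\<lambda>z. h z - h' z) \<in> L2" using hh by (rule Hplus_L2)
    show "AE z in circ. p' z - p z = h z - h' z"
      using assms(5) by eventually_elim (simp add: algebra_simps)
  qed
  then have "(\<lambda>z. h z - h' z) \<in> P \<inter> Hplus" using hh by blast
  from bspec[OF directP this] have "AE z in circ. h z - h' z = 0" by simp
  then have "AE z in circ. h z = h' z" by auto
  then show ?thesis using assms by (intro L2_norm_cong_AE) (auto intro: Hplus_L2)
qed

lemma baire_step:
  "\<exists>n c r. c \<in> L2 \<and> r > 0 \<and>
     (\<forall>g\<in>L2. L2_norm (\<lambda>z. g z - c z) < r \<longrightarrow> (\<forall>\<epsilon>>0. \<exists>e\<in>Eset P n. L2_norm (\<lambda>z. g z - e z) < \<epsilon>))"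
proof (rule ccontr)
  assume H0: "\<not> ?thesis"
  have H: "\<exists>g\<in>L2. L2_norm (\<lambda>z. g z - c z) < r \<and> (\<exists>\<epsilon>>0. \<forall>e\<in>Eset P n. L2_norm (\<lambda>z. g z - e z) \<ge> \<epsilon>)"
    if "c \<in> L2" "r > 0" for n c r
    using H0 that by (force simp: not_less)
  define Q where "Q n c r c' r' \<longleftrightarrow> c' \<in> L2 \<and> r' > 0 \<and> r' \<le> r/2 \<and> L2_norm (\<lambda>z. c' z - c z) + r' < r \<and>
      (\<forall>x\<in>L2. L2_norm (\<lambda>z. x z - c' z) \<le> r' \<longrightarrow> x \<notin> Eset P n)"
    for n c r and c' :: "complex \<Rightarrow> complex^'n" and r' :: real
  have step: "\<exists>cr'. Q n c r (fst cr') (snd cr')" if cr: "c \<in> L2" "r > 0" for n c r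
  proof -
    obtain g \<epsilon> where g: "g \<in> L2" "L2_norm (\<lambda>z. g z - c z) < r" "\<epsilon> > 0"
      "\<And>e. e \<in> Eset P n \<Longrightarrow> L2_norm (\<lambda>z. g z - e z) \<ge> \<epsilon>"
      using H[OF cr] by blast
    define dn where "dn = L2_norm (\<lambda>z. g z - c z)"
    have dn0: "dn \<ge> 0" "dn < r" using g(2) L2_norm_nonneg[of "\<lambda>z. g z - c z"] by (auto simp: dn_def)
    define r' where "r' = min (\<epsilon>/2) ((r - dn)/2)"
    have r'1: "r' \<le> \<epsilon>/2" unfolding r'_def by (rule min.cobounded1)
    have r'2: "r' \<le> (r - dn)/2" unfolding r'_def by (rule min.cobounded2)
    have r'pos: "r' > 0" using g dn0 by (simp add: r'_def)
    have "Q n c r g r'"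
      unfolding Q_def
    proof (intro conjI ballI impI)
      show "g \<in> L2" by (rule g)
      show "r' > 0" by (rule r'pos)
      have "(r - dn)/2 \<le> r/2" using dn0 by (intro divide_right_mono) auto
      then show "r' \<le> r/2" using r'2 by (rule order_trans[rotated])
      have "dn + (r - dn)/2 < r" using dn0 by (simp add: field_simps)
      moreover have "dn + r' \<le> dn + (r - dn)/2" using r'2 by (rule add_left_mono)
      ultimately show "L2_norm (\<lambda>z. g z - c z) + r' < r" unfolding dn_def[symmetric] by (metis le_less_trans)
      fix x assume x: "x \<in> L2" "L2_norm (\<lambda>z. x z - g z) \<le> r'"
      show "x \<notin> Eset P n"
      proof
        assume "x \<in> Eset P n"
        then have "L2_norm (\<lambda>z. g z - x z) \<ge> \<epsilon>" by (rule g(4))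
        moreover have "L2_norm (\<lambda>z. g z - x z) \<le> \<epsilon>/2"
          using x(2) L2_norm_commute[of x g] r'1 by linarith
        ultimately show False using g(3) by linarith
      qed
    qed
    then show ?thesis by (intro exI[of _ "(g, r')"]) simp
  qed
  define seq where "seq = rec_nat ((\<lambda>z. 0), 1::real) (\<lambda>n cr. SOME cr'. Q n (fst cr) (snd cr) (fst cr') (snd cr'))"
  have seq0: "seq 0 = ((\<lambda>z. 0), 1)" by (simp add: seq_def)
  have seqS: "seq (Suc n) = (SOME cr'. Q n (fst (seq n)) (snd (seq n)) (fst cr') (snd cr'))" for n
    by (simp add: seq_def)
  have inv: "fst (seq n) \<in> L2 \<and> snd (seq n) > 0 \<and> Q n (fst (seq n)) (snd (seq n)) (fst (seq (Suc n))) (snd (seq (Suc n)))" for n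
  proof (induction n)
    case 0
    have "fst (seq 0) \<in> L2 \<and> snd (seq 0) > 0" by (simp add: seq0 L2_zero)
    then show ?case unfolding seqS using someI_ex[OF step] by blast
  next
    case (Suc n)
    then have "fst (seq (Suc n)) \<in> L2 \<and> snd (seq (Suc n)) > 0" by (simp add: Q_def)
    then show ?case unfolding seqS[of "Suc n"] using someI_ex[OF step] by blast
  qed
  define c where "c n = fst (seq n)" for n
  define r where "r n = snd (seq n)" for n
  have cL2: "c n \<in> L2" and rpos: "r n > 0" and Qn: "Q n (c n) (r n) (c (Suc n)) (r (Suc n))" for n
    using inv[of n] by (auto simp: c_def r_def)
  have rhalf: "r (Suc n) \<le> r n / 2" for n using Qn[of n] by (simp add: Q_def)
  have rbound: "r n \<le> (1/2)^n" for n
  proof (induction n)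
    case 0 then show ?case by (simp add: r_def seq0)
  next
    case (Suc n) then show ?case using rhalf[of n] by simp
  qed
  have nest: "L2_norm (\<lambda>z. c m z - c n z) + r m \<le> r n" if "m \<ge> n" for m n
    using that
  proof (induction m rule: dec_induct)
    case base then show ?case by (simp add: L2_norm_zero_fun)
  next
    case (step m)
    have "L2_norm (\<lambda>z. c (Suc m) z - c n z) \<le> L2_norm (\<lambda>z. c (Suc m) z - c m z) + L2_norm (\<lambda>z. c m z - c n z)"
      by (intro L2_norm_triangle3 cL2)
    moreover have "L2_norm (\<lambda>z. c (Suc m) z - c m z) + r (Suc m) < r m" using Qn[of m] by (simp add: Q_def)
    ultimately show ?case using step.IH by linarith
  qed
  have nest': "L2_norm (\<lambda>z. c m z - c n z) \<le> r n" if "m \<ge> n" for m n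
    using nest[OF that] rpos[of m] by linarith
  have cauchy: "\<exists>K. \<forall>m\<ge>K. \<forall>n\<ge>K. L2_norm (\<lambda>x. c m x - c n x) < e" if e: "e > 0" for e
  proof -
    obtain K where K: "(1/2::real)^K < e/2" using real_arch_pow_inv[of "e/2" "1/2::real"] e by auto
    show ?thesis
    proof (intro exI allI impI)
      fix m n assume mn: "m \<ge> K" "n \<ge> K"
      have "L2_norm (\<lambda>x. c m x - c n x) \<le> L2_norm (\<lambda>x. c m x - c K x) + L2_norm (\<lambda>x. c K x - c n x)"
        by (intro L2_norm_triangle3 cL2)
      also have "L2_norm (\<lambda>x. c K x - c n x) = L2_norm (\<lambda>x. c n x - c K x)" by (rule L2_norm_commute)
      finally have "L2_norm (\<lambda>x. c m x - c n x) \<le> r K + r K"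
        using nest'[OF mn(1)] nest'[OF mn(2)] by linarith
      then show "L2_norm (\<lambda>x. c m x - c n x) < e" using rbound[of K] K by linarith
    qed
  qed
  obtain g where gL2: "g \<in> L2" and glim: "(\<lambda>i. L2_norm (\<lambda>x. c i x - g x)) \<longlonglongrightarrow> 0"
    using L2_complete[of c] cL2 cauchy by blast
  have gclose: "L2_norm (\<lambda>z. g z - c (Suc n) z) \<le> r (Suc n)" for n
  proof (rule LIMSEQ_le_const)
    show "(\<lambda>m. L2_norm (\<lambda>x. c m x - g x) + r (Suc n)) \<longlonglongrightarrow> r (Suc n)"
      using tendsto_add[OF glim tendsto_const[of "r (Suc n)"]] by simp
    show "\<exists>N. \<forall>m\<ge>N. L2_norm (\<lambda>z. g z - c (Suc n) z) \<le> L2_norm (\<lambda>x. c m x - g x) + r (Suc n)"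
    proof (intro exI allI impI)
      fix m assume m: "m \<ge> Suc n"
      have "L2_norm (\<lambda>z. g z - c (Suc n) z) \<le> L2_norm (\<lambda>z. g z - c m z) + L2_norm (\<lambda>z. c m z - c (Suc n) z)"
        by (intro L2_norm_triangle3 cL2 gL2)
      also have "L2_norm (\<lambda>z. g z - c m z) = L2_norm (\<lambda>z. c m z - g z)" by (rule L2_norm_commute)
      finally show "L2_norm (\<lambda>z. g z - c (Suc n) z) \<le> L2_norm (\<lambda>x. c m x - g x) + r (Suc n)"
        using nest'[OF m] by linarith
    qed
  qed
  have notE: "g \<notin> Eset P n" for n
    using Qn[of n] gclose[of n] gL2 by (auto simp: Q_def)
  obtain p h where ph: "p \<in> P" "h \<in> Hplus" "AE z in circ. g z = p z + h z"
    using sumP gL2 by blast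
  have "L2_norm h \<le> real (nat \<lceil>L2_norm h\<rceil>)" by linarith
  then have "g \<in> Eset P (nat \<lceil>L2_norm h\<rceil>)" using ph gL2 by (auto simp: Eset_def)
  then show False using notE by blast
qed

lemma approx_decomp:
  "\<exists>M\<ge>0. \<forall>g\<in>L2. \<forall>\<epsilon>>0. \<exists>p\<in>P. \<exists>h\<in>Hplus. L2_norm h \<le> M * L2_norm g \<and> L2_norm (\<lambda>z. g z - (p z + h z)) < \<epsilon>"
proof -
  obtain n c r where c: "c \<in> L2" "r > 0" and dense:
    "\<And>g \<epsilon>. g \<in> L2 \<Longrightarrow> L2_norm (\<lambda>z. g z - c z) < r \<Longrightarrow> \<epsilon> > 0 \<Longrightarrow> \<exists>e\<in>Eset P n. L2_norm (\<lambda>z. g z - e z) < \<epsilon>"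
    using baire_step by blast
  define M where "M = 4 * real n / r"
  have M0: "M \<ge> 0" using c by (simp add: M_def)
  have main: "\<exists>p\<in>P. \<exists>h\<in>Hplus. L2_norm h \<le> M * L2_norm g \<and> L2_norm (\<lambda>z. g z - (p z + h z)) < \<epsilon>"
    if g: "g \<in> L2" and \<epsilon>: "\<epsilon> > 0" for g \<epsilon>
  proof (cases "L2_norm g = 0")
    case True
    show ?thesis
      using True \<epsilon> P_zero Hplus_zero by (intro bexI[of _ "\<lambda>z. 0"]) (auto simp: L2_norm_zero_fun)
  next
    case False
    then have Ng: "L2_norm g > 0" using L2_norm_nonneg[of g] by linarith
    define s where "s = r / (2 * L2_norm g)"
    have s: "s > 0" using Ng c by (simp add: s_def)
    define g' where "g' z = c z + complex_of_real s *s g z" for z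
    have g'L2: "g' \<in> L2" unfolding g'_def using c g by (intro L2_add L2_smult)
    have "L2_norm (\<lambda>z. g' z - c z) = L2_norm (\<lambda>z. complex_of_real s *s g z)"
      by (simp add: g'_def)
    also have "\<dots> = s * L2_norm g" using s by (simp add: L2_norm_smult)
    also have "\<dots> = r/2" using Ng by (simp add: s_def)
    finally have "L2_norm (\<lambda>z. g' z - c z) < r" using c by simp
    then obtain e1 where e1: "e1 \<in> Eset P n" "L2_norm (\<lambda>z. g' z - e1 z) < s * \<epsilon> / 2"
      using dense[OF g'L2] s \<epsilon> by (metis half_gt_zero mult_pos_pos)
    have "L2_norm (\<lambda>z. c z - c z) < r" using c by (simp add: L2_norm_zero_fun)
    then obtain e2 where e2: "e2 \<in> Eset P n" "L2_norm (\<lambda>z. c z - e2 z) < s * \<epsilon> / 2"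
      using dense[OF c(1)] s \<epsilon> by (metis half_gt_zero mult_pos_pos)
    obtain p1 h1 where ph1: "e1 \<in> L2" "p1 \<in> P" "h1 \<in> Hplus" "AE z in circ. e1 z = p1 z + h1 z" "L2_norm h1 \<le> real n"
      using e1(1) by (auto simp: Eset_def)
    obtain p2 h2 where ph2: "e2 \<in> L2" "p2 \<in> P" "h2 \<in> Hplus" "AE z in circ. e2 z = p2 z + h2 z" "L2_norm h2 \<le> real n"
      using e2(1) by (auto simp: Eset_def)
    define p where "p z = complex_of_real (1/s) *s (p1 z - p2 z)" for z
    define h where "h z = complex_of_real (1/s) *s (h1 z - h2 z)" for z
    have pP: "p \<in> P" unfolding p_def using ph1 ph2 by (intro P_smult P_diff)
    have hH: "h \<in> Hplus" unfolding h_def using ph1 ph2 by (intro Hplus_smult Hplus_diff)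
    have "h = (\<lambda>z. complex_of_real (1/s) *s (h1 z - h2 z))" by (rule ext) (simp add: h_def)
    then have "L2_norm h = (1/s) * L2_norm (\<lambda>z. h1 z - h2 z)"
      using s L2_norm_smult[of "complex_of_real (1/s)" "\<lambda>z. h1 z - h2 z"] by (simp add: norm_divide)
    also have "\<dots> \<le> (1/s) * (real n + real n)"
    proof (intro mult_left_mono)
      have "L2_norm (\<lambda>z. h1 z - h2 z) \<le> L2_norm h1 + L2_norm h2"
        using ph1 ph2 by (intro L2_norm_diff_le Hplus_L2)
      then show "L2_norm (\<lambda>z. h1 z - h2 z) \<le> real n + real n" using ph1(5) ph2(5) by linarith
    qed (use s in simp)
    also have "\<dots> = M * L2_norm g" using Ng c by (simp add: M_def s_def field_simps)
    finally have hb: "L2_norm h \<le> M * L2_norm g" .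
    have eqAE: "AE z in circ. g z - (p z + h z) = complex_of_real (1/s) *s ((g' z - e1 z) - (c z - e2 z))"
      using ph1(4) ph2(4)
    proof eventually_elim
      case (elim z)
      show ?case
        using s unfolding elim p_def h_def g'_def
        by (simp add: vec_eq_iff vector_scalar_mult_def field_simps)
    qed
    have L2a: "(\<lambda>z. g z - (p z + h z)) \<in> L2"
      using g pP hH by (intro L2_diff L2_add) (auto intro: P_L2 Hplus_L2)
    have L2b: "(\<lambda>z. g' z - e1 z) \<in> L2" "(\<lambda>z. c z - e2 z) \<in> L2"
      using g'L2 c ph1 ph2 by (auto intro: L2_diff)
    have "L2_norm (\<lambda>z. g z - (p z + h z)) = L2_norm (\<lambda>z. complex_of_real (1/s) *s ((g' z - e1 z) - (c z - e2 z)))"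
      by (rule L2_norm_cong_AE[OF eqAE L2a]) (intro L2_smult L2_diff L2b)
    also have "\<dots> = (1/s) * L2_norm (\<lambda>z. (g' z - e1 z) - (c z - e2 z))"
      using s L2_norm_smult[of "complex_of_real (1/s)" "\<lambda>z. (g' z - e1 z) - (c z - e2 z)"]
      by (simp only:) (simp add: norm_divide)
    also have "\<dots> \<le> (1/s) * (L2_norm (\<lambda>z. g' z - e1 z) + L2_norm (\<lambda>z. c z - e2 z))"
      using s by (intro mult_left_mono L2_norm_diff_le L2b) auto
    also have "\<dots> < (1/s) * (s * \<epsilon> / 2 + s * \<epsilon> / 2)"
      using s add_strict_mono[OF e1(2) e2(2)] by (intro mult_strict_left_mono) auto
    also have "\<dots> = \<epsilon>" using s by (simp add: field_simps)
    finally show ?thesis using pP hH hb by blast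
  qed
  show ?thesis using M0 main by blast
qed

lemma decomp_bound:
  "\<exists>C\<ge>0. \<forall>p\<in>P. \<forall>h\<in>Hplus. L2_norm h \<le> C * L2_norm (\<lambda>z. p z + h z)"
proof -
  obtain M where M0: "M \<ge> 0" and D: "\<And>g \<epsilon>. g \<in> L2 \<Longrightarrow> \<epsilon> > 0 \<Longrightarrow>
      \<exists>p\<in>P. \<exists>h\<in>Hplus. L2_norm h \<le> M * L2_norm g \<and> L2_norm (\<lambda>z. g z - (p z + h z)) < \<epsilon>"
    using approx_decomp by blast
  have "L2_norm h0 \<le> M * L2_norm (\<lambda>z. p0 z + h0 z)" if p0: "p0 \<in> P" and h0: "h0 \<in> Hplus" for p0 h0
  proof (rule field_le_epsilon)
    fix \<delta> :: real assume \<delta>: "\<delta> > 0"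
    define g where "g z = p0 z + h0 z" for z
    have gL2: "g \<in> L2" unfolding g_def using p0 h0 by (intro L2_add P_L2 Hplus_L2)
    define \<eta> where "\<eta> = \<delta> / (4*M + 1)"
    have \<eta>: "\<eta> > 0" using \<delta> M0 by (simp add: \<eta>_def add_nonneg_pos)
    have \<eta>M: "4*M*\<eta> \<le> \<delta>"
    proof -
      have "4*M*\<eta> = \<delta> * (4*M / (4*M+1))" using M0 by (simp add: \<eta>_def field_simps)
      also have "\<dots> \<le> \<delta> * 1" using M0 \<delta> by (intro mult_left_mono) auto
      finally show ?thesis by simp
    qed
    define eps where "eps k = \<eta> * (1/2)^k" for k :: nat
    have eps_pos: "eps k > 0" for k using \<eta> by (simp add: eps_def)
    define R where "R k q ph \<longleftrightarrow> fst ph \<in> P \<and> snd ph \<in> Hplus \<and> L2_norm (snd ph) \<le> M * L2_norm q \<and>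
        L2_norm (\<lambda>z. q z - (fst ph z + snd ph z)) < eps k"
      for k and q :: "complex \<Rightarrow> complex^'n" and ph
    have Rex: "\<exists>ph. R k q ph" if "q \<in> L2" for k q
      using D[OF that eps_pos[of k]] by (auto simp: R_def)
    define step where "step k q = (SOME ph. R k q ph)" for k q
    define gs where "gs = rec_nat g (\<lambda>k q. (\<lambda>z. q z - (fst (step k q) z + snd (step k q) z)))"
    have gs0: "gs 0 = g" by (simp add: gs_def)
    have gsS: "gs (Suc k) = (\<lambda>z. gs k z - (fst (step k (gs k)) z + snd (step k (gs k)) z))" for k
      by (simp add: gs_def)
    have inv: "gs k \<in> L2 \<and> R k (gs k) (step k (gs k))" for k
    proof (induction k)
      case 0
      then show ?case using gL2 someI_ex[OF Rex[OF gL2]] by (simp add: gs0 step_def)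
    next
      case (Suc k)
      then have "gs (Suc k) \<in> L2" unfolding gsS R_def
        by (intro L2_diff L2_add) (auto intro: P_L2 Hplus_L2)
      then show ?case using someI_ex[OF Rex] by (simp add: step_def)
    qed
    define pk where "pk k = fst (step k (gs k))" for k
    define hk where "hk k = snd (step k (gs k))" for k
    have gsL2: "gs k \<in> L2" and pkP: "pk k \<in> P" and hkH: "hk k \<in> Hplus"
      and hkb: "L2_norm (hk k) \<le> M * L2_norm (gs k)" and gsb: "L2_norm (gs (Suc k)) < eps k" for k
      using inv[of k] by (auto simp: R_def pk_def hk_def gsS)
    have hkL2: "hk k \<in> L2" for k using hkH by (rule Hplus_L2)
    have pkL2: "pk k \<in> L2" for k using pkP by (rule P_L2)
    define hb where "hb k = (if k = 0 then M * L2_norm g else 0) + 2*M*\<eta>*(1/2)^k" for k :: nat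
    have hk_le: "L2_norm (hk k) \<le> hb k" for k
    proof (cases k)
      case 0
      have "2*M*\<eta> \<ge> 0" using M0 \<eta> by simp
      then show ?thesis using hkb[of 0] 0 by (simp add: hb_def gs0)
    next
      case (Suc j)
      have "L2_norm (hk k) \<le> M * L2_norm (gs (Suc j))" using hkb[of k] Suc by simp
      also have "\<dots> \<le> M * eps j" using gsb[of j] M0 by (intro mult_left_mono) auto
      also have "\<dots> = 2*M*\<eta>*(1/2)^k" using Suc by (simp add: eps_def)
      finally show ?thesis using Suc by (simp add: hb_def)
    qed
    define S where "S m z = (\<Sum>k<m. hk k z)" for m z
    define T where "T m z = (\<Sum>k<m. pk k z)" for m z
    have SH: "S m \<in> Hplus" for m unfolding S_def[abs_def] by (intro Hplus_sum hkH)
    have SL2: "S m \<in> L2" for m using SH by (rule Hplus_L2)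
    have TP': "T m \<in> P" for m unfolding T_def[abs_def] by (intro P_sum pkP)
    have ident: "gs m z = g z - (T m z + S m z)" for m z
      by (induction m) (auto simp: gs0 gsS S_def T_def pk_def hk_def algebra_simps)
    have Sdiff: "L2_norm (\<lambda>z. S m z - S n z) \<le> 4*M*\<eta>*(1/2)^n" if nm: "n \<le> m" "n \<ge> 1" for m n
    proof -
      have "L2_norm (\<lambda>z. S m z - S n z) = L2_norm (\<lambda>z. \<Sum>k\<in>{n..<m}. hk k z)"
        using nm by (simp add: S_def sum_diff_ivl)
      also have "\<dots> \<le> (\<Sum>k\<in>{n..<m}. L2_norm (hk k))" by (intro L2_norm_sum_le hkL2)
      also have "\<dots> \<le> (\<Sum>k\<in>{n..<m}. 2*M*\<eta>*(1/2)^k)"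
      proof (intro sum_mono)
        fix k assume "k \<in> {n..<m}"
        then have "k \<noteq> 0" using nm by auto
        then show "L2_norm (hk k) \<le> 2*M*\<eta>*(1/2)^k" using hk_le[of k] by (simp add: hb_def)
      qed
      also have "\<dots> = 2*M*\<eta> * (\<Sum>k\<in>{n..<m}. (1/2)^k)" by (simp add: sum_distrib_left)
      also have "\<dots> \<le> 2*M*\<eta> * (2*(1/2)^n)"
        using M0 \<eta> by (intro mult_left_mono geo_tail_le) auto
      finally show ?thesis by simp
    qed
    have Meta0: "4*M*\<eta> \<ge> 0" using M0 \<eta> by simp
    then have Meta1: "4*M*\<eta> + 1 > 0" by linarith
    have Scauchy: "\<exists>K. \<forall>m\<ge>K. \<forall>n\<ge>K. L2_norm (\<lambda>x. S m x - S n x) < e" if e: "e > 0" for e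
    proof -
      obtain K0 where K0: "(1/2::real)^K0 < e / (4*M*\<eta> + 1)"
        using real_arch_pow_inv[of "e / (4*M*\<eta> + 1)" "1/2::real"] e M0 \<eta>
        by (auto simp: add_nonneg_pos)
      define K where "K = Suc K0"
      have bnd: "4*M*\<eta>*(1/2)^K < e"
      proof -
        have "4*M*\<eta>*(1/2)^K \<le> (4*M*\<eta>+1) * (1/2::real)^K0"
          unfolding K_def using M0 \<eta> by (intro mult_mono) (auto simp: power_Suc)
        also have "\<dots> < (4*M*\<eta>+1) * (e / (4*M*\<eta> + 1))"
          using K0 M0 \<eta> by (intro mult_strict_left_mono) (auto simp: add_nonneg_pos)
        also have "\<dots> = e" using Meta1 by simp
        finally show ?thesis .
      qed
      show ?thesis
      proof (intro exI[of _ K] allI impI)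
        fix m n assume mn: "m \<ge> K" "n \<ge> K"
        show "L2_norm (\<lambda>x. S m x - S n x) < e"
        proof (cases "n \<le> m")
          case True
          then have "L2_norm (\<lambda>x. S m x - S n x) \<le> 4*M*\<eta>*(1/2)^n"
            using mn by (intro Sdiff) (auto simp: K_def)
          also have "\<dots> \<le> 4*M*\<eta>*(1/2)^K"
            using mn M0 \<eta> by (intro mult_left_mono power_decreasing) auto
          finally show ?thesis using bnd by linarith
        next
          case False
          then have "L2_norm (\<lambda>x. S n x - S m x) \<le> 4*M*\<eta>*(1/2)^m"
            using mn by (intro Sdiff) (auto simp: K_def)
          also have "\<dots> \<le> 4*M*\<eta>*(1/2)^K"
            using mn M0 \<eta> by (intro mult_left_mono power_decreasing) auto
          finally show ?thesis using bnd L2_norm_commute[of "S m" "S n"] by linarith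
        qed
      qed
    qed
    obtain H where HL2: "H \<in> L2" and Hlim: "(\<lambda>m. L2_norm (\<lambda>x. S m x - H x)) \<longlonglongrightarrow> 0"
      using L2_complete[of S] SL2 Scauchy by blast
    have HH: "H \<in> Hplus" by (rule Hplus_closed[OF SH HL2 Hlim])
    have gslim: "(\<lambda>m. L2_norm (gs m)) \<longlonglongrightarrow> 0"
    proof (rule tendsto_sandwich[where f="\<lambda>m. 0" and h="\<lambda>m. 2 * \<eta> * (1/2)^m"])
      show "\<forall>\<^sub>F m in sequentially. 0 \<le> L2_norm (gs m)" by (simp add: L2_norm_nonneg)
      show "\<forall>\<^sub>F m in sequentially. L2_norm (gs m) \<le> 2 * \<eta> * (1/2)^m"
        unfolding eventually_sequentially
      proof (intro exI[of _ 1] allI impI)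
        fix m :: nat assume "m \<ge> 1"
        then obtain j where j: "m = Suc j" by (cases m) auto
        show "L2_norm (gs m) \<le> 2 * \<eta> * (1/2)^m" using gsb[of j] j by (simp add: eps_def)
      qed
      show "(\<lambda>m. 2 * \<eta> * (1/2::real)^m) \<longlonglongrightarrow> 0"
        using tendsto_mult[OF tendsto_const[of "2*\<eta>"] LIMSEQ_power_zero[of "1/2::real"]] by simp
    qed simp
    have gH: "(\<lambda>z. g z - H z) \<in> P"
    proof (rule P_closed[of T])
      show "T m \<in> P" for m by (rule TP')
      show "(\<lambda>z. g z - H z) \<in> L2" using gL2 HL2 by (rule L2_diff)
      show "(\<lambda>m. L2_norm (\<lambda>z. T m z - (g z - H z))) \<longlonglongrightarrow> 0"
      proof (rule tendsto_sandwich[where f="\<lambda>m. 0" and h="\<lambda>m. L2_norm (\<lambda>x. S m x - H x) + L2_norm (gs m)"])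
        show "\<forall>\<^sub>F m in sequentially. 0 \<le> L2_norm (\<lambda>z. T m z - (g z - H z))" by (simp add: L2_norm_nonneg)
        show "\<forall>\<^sub>F m in sequentially. L2_norm (\<lambda>z. T m z - (g z - H z)) \<le> L2_norm (\<lambda>x. S m x - H x) + L2_norm (gs m)"
        proof (rule always_eventually, rule allI)
          fix m
          have "(\<lambda>z. T m z - (g z - H z)) = (\<lambda>z. (H z - S m z) - gs m z)"
            by (rule ext) (simp add: ident algebra_simps)
          then have "L2_norm (\<lambda>z. T m z - (g z - H z)) \<le> L2_norm (\<lambda>z. H z - S m z) + L2_norm (gs m)"
            using HL2 SL2 gsL2 by (simp add: L2_norm_diff_le L2_diff)
          then show "L2_norm (\<lambda>z. T m z - (g z - H z)) \<le> L2_norm (\<lambda>x. S m x - H x) + L2_norm (gs m)"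
            using L2_norm_commute[of H "S m"] by simp
        qed
        show "(\<lambda>m. L2_norm (\<lambda>x. S m x - H x) + L2_norm (gs m)) \<longlonglongrightarrow> 0"
          using tendsto_add[OF Hlim gslim] by simp
      qed simp
    qed
    have eqn: "L2_norm h0 = L2_norm H"
    proof (rule unique_decomp[OF p0 h0 gH HH])
      show "AE z in circ. p0 z + h0 z = g z - H z + H z" by (simp add: g_def)
    qed
    have Sb: "L2_norm (S m) \<le> M * L2_norm g + 4*M*\<eta>" for m
    proof -
      have "L2_norm (S m) = L2_norm (\<lambda>z. \<Sum>k<m. hk k z)" by (simp add: S_def[abs_def])
      also have "\<dots> \<le> (\<Sum>k<m. L2_norm (hk k))" by (intro L2_norm_sum_le hkL2)
      also have "\<dots> \<le> (\<Sum>k<m. hb k)" by (intro sum_mono hk_le)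
      also have "\<dots> = (\<Sum>k<m. (if k = 0 then M * L2_norm g else 0)) + 2*M*\<eta>*(\<Sum>k<m. (1/2::real)^k)"
        by (simp add: hb_def sum.distrib sum_distrib_left)
      also have "\<dots> \<le> M * L2_norm g + 2*M*\<eta>*2"
      proof (intro add_mono mult_left_mono)
        show "(\<Sum>k<m. (if k = 0 then M * L2_norm g else 0)) \<le> M * L2_norm g"
          using M0 L2_norm_nonneg[of g] by (cases m) (auto simp: sum.delta)
        show "(\<Sum>k<m. (1/2::real)^k) \<le> 2" using geo_tail_le[of 0 m] by (simp add: atLeast0LessThan)
      qed (use M0 \<eta> in auto)
      finally show ?thesis by simp
    qed
    have "L2_norm H \<le> M * L2_norm g + 4*M*\<eta>"
    proof (rule LIMSEQ_le_const)
      show "(\<lambda>m. M * L2_norm g + 4*M*\<eta> + L2_norm (\<lambda>x. S m x - H x)) \<longlonglongrightarrow> M * L2_norm g + 4*M*\<eta>"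
        using tendsto_add[OF tendsto_const Hlim] by simp
      show "\<exists>N. \<forall>m\<ge>N. L2_norm H \<le> M * L2_norm g + 4*M*\<eta> + L2_norm (\<lambda>x. S m x - H x)"
      proof (intro exI allI impI)
        fix m :: nat
        have "L2_norm H = L2_norm (\<lambda>z. S m z + (H z - S m z))" by simp
        also have "\<dots> \<le> L2_norm (S m) + L2_norm (\<lambda>z. H z - S m z)"
          using SL2 HL2 by (intro L2_norm_triangle L2_diff) auto
        also have "L2_norm (\<lambda>z. H z - S m z) = L2_norm (\<lambda>x. S m x - H x)" by (rule L2_norm_commute)
        finally show "L2_norm H \<le> M * L2_norm g + 4*M*\<eta> + L2_norm (\<lambda>x. S m x - H x)"
          using Sb[of m] by linarith
      qed
    qed
    then show "L2_norm h0 \<le> M * L2_norm (\<lambda>z. p0 z + h0 z) + \<delta>"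
      using eqn \<eta>M by (simp add: g_def[abs_def])
  qed
  then show ?thesis using M0 by blast
qed

end

theorem lemmaA2:
  fixes P :: "(complex \<Rightarrow> complex^'n::finite) set"
  assumes closedP: "closed_L2_subspace P"
    and shift: "\<forall>f\<in>P. (\<lambda>z. inverse z *s f z) \<in> P"
    and sum: "\<forall>f\<in>L2. \<exists>p\<in>P. \<exists>h\<in>Hplus. AE z in circ. f z = p z + h z"
    and direct: "\<forall>f\<in>P \<inter> Hplus. AE z in circ. f z = 0"
  shows "\<forall>f\<in>L2. (\<forall>n::nat. (\<lambda>z. z^n *s f z) \<in> P) \<longrightarrow> (AE z in circ. f z = 0)"
proof (intro ballI impI)
  fix f :: "complex \<Rightarrow> complex^'n" assume fL2: "f \<in> L2" and fP: "\<forall>n::nat. (\<lambda>z. z^n *s f z) \<in> P"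
  obtain C where C0: "C \<ge> 0" and Cb: "\<And>p h. p \<in> P \<Longrightarrow> h \<in> Hplus \<Longrightarrow> L2_norm h \<le> C * L2_norm (\<lambda>z. p z + h z)"
    using decomp_bound[OF closedP sum direct] by blast
  have [measurable]: "f \<in> borel_measurable borel" using fL2 by (rule L2_meas)
  have key: "L2_norm f \<le> (1 + C) * \<epsilon>" if \<epsilon>: "\<epsilon> > 0" for \<epsilon>
  proof -
    have fD: "f \<in> Dn" by (rule L2_Dn[OF fL2])
    obtain t where tT: "t \<in> TP" and ft: "L2_norm (\<lambda>z. f z - t z) < \<epsilon>"
      using fD \<epsilon> by (auto simp: Dn_def)
    obtain K where hK: "(\<lambda>z. z^K *s t z) \<in> Hplus" using tT by (auto simp: TP_def)
    have tL2: "t \<in> L2" using tT by (rule TP_L2)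
    have [measurable]: "t \<in> borel_measurable borel" using tL2 by (rule L2_meas)
    define q where "q z = z^K *s f z" for z
    define hh where "hh z = z^K *s t z" for z
    have qP: "q \<in> P" using fP by (simp add: q_def[abs_def])
    have hhH: "hh \<in> Hplus" using hK by (simp add: hh_def[abs_def])
    have qL2: "q \<in> L2" using qP closedP by (auto simp: closed_L2_subspace_def)
    have hhL2: "hh \<in> L2" using hhH by (rule Hplus_L2)
    have unimod: "AE z in circ. norm (z^K) = 1"
      using AE_circ_norm by eventually_elim (simp add: norm_power)
    have Nqh: "L2_norm (\<lambda>z. q z - hh z) = L2_norm (\<lambda>z. f z - t z)"
    proof -
      have eq: "(\<lambda>z. q z - hh z) = (\<lambda>z. z^K *s (f z - t z))"
        by (rule ext) (simp add: q_def hh_def vector_ssub_ldistrib)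
      have "L2_norm (\<lambda>z. q z - hh z) = L2_norm (\<lambda>z. z^K *s (f z - t z))" by (simp only: eq)
      also have "\<dots> = L2_norm (\<lambda>z. f z - t z)"
        by (rule L2_norm_mult_unimod[OF unimod]) auto
      finally show ?thesis .
    qed
    have Nq: "L2_norm q = L2_norm f"
    proof -
      have "L2_norm q = L2_norm (\<lambda>z. z^K *s f z)" by (simp add: q_def[abs_def])
      also have "\<dots> = L2_norm f" by (rule L2_norm_mult_unimod[OF unimod]) auto
      finally show ?thesis .
    qed
    have mqP: "(\<lambda>z. (-1) *s q z) \<in> P"
      using qP closedP unfolding closed_L2_subspace_def by (elim conjE) (drule bspec, assumption, blast)
    have "L2_norm hh \<le> C * L2_norm (\<lambda>z. (-1) *s q z + hh z)" by (rule Cb[OF mqP hhH])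
    also have "L2_norm (\<lambda>z. (-1) *s q z + hh z) = L2_norm (\<lambda>z. q z - hh z)"
      using L2_norm_commute[of hh q] by (simp add: vector_sneg_minus1[symmetric])
    finally have Nhh: "L2_norm hh \<le> C * L2_norm (\<lambda>z. q z - hh z)" .
    have "L2_norm q = L2_norm (\<lambda>z. (q z - hh z) + hh z)" by simp
    also have "\<dots> \<le> L2_norm (\<lambda>z. q z - hh z) + L2_norm hh"
      using qL2 hhL2 by (intro L2_norm_triangle L2_diff)
    also have "\<dots> \<le> (1 + C) * L2_norm (\<lambda>z. q z - hh z)"
      using Nhh by (simp add: algebra_simps)
    also have "\<dots> \<le> (1 + C) * \<epsilon>"
      using Nqh ft C0 by (intro mult_left_mono) auto
    finally show ?thesis using Nq by simp
  qed
  have "L2_norm f \<le> 0"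
  proof (rule field_le_epsilon)
    fix e :: real assume e: "e > 0"
    have "L2_norm f \<le> (1 + C) * (e / (1 + C))" using e C0 by (intro key) auto
    also have "\<dots> = e" using C0 by simp
    finally show "L2_norm f \<le> 0 + e" by simp
  qed
  then have "L2_norm f = 0" using L2_norm_nonneg[of f] by linarith
  then show "AE z in circ. f z = 0" using L2_norm_zero_iff[OF fL2] by simp
qed

end
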